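(* Let $\varphi,\psi$ be unital linear functionals on $\mathbb{C}\langle X,Y\rangle$ such that $X$ and $Y$ are $c$-free with respect to $(\varphi,\psi)$. Then for every $P\in\mathbb{C}\langle X,Y\rangle$: (a) $\beta^{b,\varphi}_X(P)=\epsilon(P)+(\beta^{\delta,\varphi}_X\otimes\beta^{b,\varphi}_X)(\overleftarrow{\delta}_XP)=\epsilon(P)+(\beta^{b,\varphi}_X\otimes\beta^{\delta,\varphi}_X)(\overrightarrow{\delta}_XP)$; (b) $$\beta^{\delta,\varphi}_X(P)=\epsilon(P)+\sum_{k=1}^\infty\beta^\varphi_k(X,\dots,X)\,\bigl[\epsilon\otimes(\beta^{b,\psi}_Y)^{\otimes(k-1)}\otimes\epsilon\bigr]\bigl(\partial_X^k P\bigr).$$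
   Context: $\mathbb{C}\langle X,Y\rangle$ is the free unital algebra on two letters; $\epsilon(P)$ is the constant coefficient of $P$. $X,Y$ are $c$-free w.r.t. $(\varphi,\psi)$ if the unital subalgebras $\mathbb{C}\langle X\rangle$, $\mathbb{C}\langle Y\rangle$ are free w.r.t. $\psi$ (i.e. $\psi(u_1\cdots u_n)=0$ for alternating centered $u_j$) and $\varphi(u_1\cdots u_n)=\varphi(u_1)\cdots\varphi(u_n)$ for alternating $u_j$ with $\psi(u_j)=0$. For a functional $\theta$, $\beta^\theta_n$ are the Boolean cumulants: $\theta(a_1\cdots a_n)=\sum_{k=1}^n\beta^\theta_k(a_1,\dots,a_k)\theta(a_{k+1}\cdots a_n)$. Every monomial $W\ne1$ has a unique block factorization $W=U_1\cdots U_n$ into nonempty monomials each in $X$ only or $Y$ only, alternating. Block Boolean functional: $\beta^{b,\theta}(1)=1$, $\beta^{b,\theta}(W)=\beta^\theta_n(U_1,\dots,U_n)$; $\beta^{b,\theta}_X(1)=1$, $\beta^{b,\theta}_X(W)=\beta^{b,\theta}(W)$ if the first and last letters of $W\neq 1$ are $X$, and $0$ otherwise ($\beta^{b,\theta}_Y$ analogously). Letter-wise functional: $\beta^{\delta,\theta}_X(1)=1$, $\beta^{\delta,\theta}_X(Z_1\cdots Z_k)=\beta^\theta_k(Z_1,\dots,Z_k)$ ($Z_i\in\{X,Y\}$) if $Z_1=Z_k=X$, else $0$. All are extended linearly. On monomials: $\partial_X^k(W)=\sum W_0\otimes W_1\otimes\cdots\otimes W_k$ over all factorizations $W=W_0XW_1X\cdots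 XW_k$ ($W_i$ monomials, possibly $1$); $\overrightarrow{\delta}_X(W)=\sum_{W=UXV}U\otimes XV$ and $\overleftarrow{\delta}_X(W)=\sum_{W=UXV}UX\otimes V$; extended linearly. Tensor products of functionals act by $(f_0\otimes\cdots\otimes f_k)(W_0\otimes\cdots\otimes W_k)=\prod f_i(W_i)$. *)

theory Defs
  imports Complex_Main
begin

text \<open>The free unital algebra C<X,Y>: monomials are words over the two letters,
  a polynomial is a finitely supported coefficient function on words.
  A linear functional on C<X,Y> is given by its values on monomials and
  extended linearly via app.\<close>

datatype letter = X | Y

type_synonym word = "letter list"
type_synonym cpoly = "word \<Rightarrow> complex"

definition supp :: "cpoly \<Rightarrow> word set" where
  "supp P = {w. P w \<noteq> 0}"

definition is_poly :: "cpoly \<Rightarrow> bool" where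
  "is_poly P \<longleftrightarrow> finite (supp P)"

definition app :: "(word \<Rightarrow> complex) \<Rightarrow> cpoly \<Rightarrow> complex" where
  "app f P = (\<Sum>w\<in>supp P. P w * f w)"

definition mono :: "word \<Rightarrow> cpoly" where
  "mono w = (\<lambda>v. if v = w then 1 else 0)"

definition pmult :: "cpoly \<Rightarrow> cpoly \<Rightarrow> cpoly" where
  "pmult P Q = (\<lambda>w. \<Sum>i\<le>length w. P (take i w) * Q (drop i w))"

fun pprod :: "cpoly list \<Rightarrow> cpoly" where
  "pprod [] = mono []"
| "pprod (u # us) = pmult u (pprod us)"

definition in_alg :: "letter \<Rightarrow> cpoly \<Rightarrow> bool" where
  "in_alg a P \<longleftrightarrow> is_poly P \<and> (\<forall>w. P w \<noteq> 0 \<longrightarrow> set w \<subseteq> {a})"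

definition alternating :: "letter list \<Rightarrow> cpoly list \<Rightarrow> bool" where
  "alternating ls us \<longleftrightarrow> length ls = length us \<and>
     (\<forall>i<length us. in_alg (ls ! i) (us ! i)) \<and>
     (\<forall>i. Suc i < length ls \<longrightarrow> ls ! i \<noteq> ls ! Suc i)"

definition unital :: "(word \<Rightarrow> complex) \<Rightarrow> bool" where
  "unital f \<longleftrightarrow> f [] = 1"

definition free_wrt :: "(word \<Rightarrow> complex) \<Rightarrow> bool" where
  "free_wrt psi \<longleftrightarrow> (\<forall>ls us. us \<noteq> [] \<longrightarrow> alternating ls us \<longrightarrow>
      (\<forall>u\<in>set us. app psi u = 0) \<longrightarrow> app psi (pprod us) = 0)"

definition c_free :: "(word \<Rightarrow> complex) \<Rightarrow> (word \<Rightarrow> complex) \<Rightarrow> bool" where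
  "c_free phi psi \<longleftrightarrow> free_wrt psi \<and>
     (\<forall>ls us. us \<noteq> [] \<longrightarrow> alternating ls us \<longrightarrow>
      (\<forall>u\<in>set us. app psi u = 0) \<longrightarrow>
      app phi (pprod us) = (\<Prod>u\<leftarrow>us. app phi u))"

text \<open>Boolean cumulants: theta(a1...an) = sum_k beta_k(a1..ak) theta(a_{k+1}..a_n),
  where the term k = n contributes beta_n(a1..an) * theta(1) = beta_n(a1..an) (theta unital).\<close>
function bcum :: "(word \<Rightarrow> complex) \<Rightarrow> cpoly list \<Rightarrow> complex" where
  "bcum th as = (if as = [] then 0 else
     app th (pprod as) - (\<Sum>k\<in>{1..<length as}. bcum th (take k as) * app th (pprod (drop k as))))"
  by auto
termination
  by (relation "measure (\<lambda>(th, as). length as)") auto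

text \<open>block factorization into maximal runs of equal letters\<close>
fun blocks :: "word \<Rightarrow> word list" where
  "blocks [] = []"
| "blocks (a # w) = (case blocks w of [] \<Rightarrow> [[a]]
     | b # bs \<Rightarrow> (if hd b = a then (a # b) # bs else [a] # b # bs))"

definition bb :: "(word \<Rightarrow> complex) \<Rightarrow> word \<Rightarrow> complex" where
  "bb th W = (if W = [] then 1 else bcum th (map mono (blocks W)))"

definition bb_let :: "letter \<Rightarrow> (word \<Rightarrow> complex) \<Rightarrow> word \<Rightarrow> complex" where
  "bb_let a th W = (if W = [] then 1 else if hd W = a \<and> last W = a then bb th W else 0)"

definition bdelta :: "letter \<Rightarrow> (word \<Rightarrow> complex) \<Rightarrow> word \<Rightarrow> complex" where
  "bdelta a th W = (if W = [] then 1 else if hd W = a \<and> last W = a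
       then bcum th (map (\<lambda>z. mono [z]) W) else 0)"

definition eps :: "word \<Rightarrow> complex" where
  "eps W = (if W = [] then 1 else 0)"

text \<open>coproducts on monomials, as lists of simple tensors\<close>
definition delta_left :: "letter \<Rightarrow> word \<Rightarrow> (word \<times> word) list" where
  "delta_left a W = [(take (Suc i) W, drop (Suc i) W). i \<leftarrow> [0..<length W], W ! i = a]"

definition delta_right :: "letter \<Rightarrow> word \<Rightarrow> (word \<times> word) list" where
  "delta_right a W = [(take i W, drop i W). i \<leftarrow> [0..<length W], W ! i = a]"

text \<open>partial^k: all factorizations W = W0 a W1 a ... a Wk, as lists [W0,...,Wk]\<close>
fun partial :: "letter \<Rightarrow> nat \<Rightarrow> word \<Rightarrow> word list list" where
  "partial a 0 W = [[W]]"
| "partial a (Suc k) W = concat [map (\<lambda>r. take i W # r) (partial a k (drop (Suc i) W)).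
      i \<leftarrow> [0..<length W], W ! i = a]"

definition tens2 :: "(word \<Rightarrow> complex) \<Rightarrow> (word \<Rightarrow> complex) \<Rightarrow> (word \<times> word) list \<Rightarrow> complex" where
  "tens2 f g ts = (\<Sum>(u, v)\<leftarrow>ts. f u * g v)"

definition tens :: "(word \<Rightarrow> complex) list \<Rightarrow> word list list \<Rightarrow> complex" where
  "tens fs ts = (\<Sum>t\<leftarrow>ts. \<Prod>(f, w)\<leftarrow>zip fs t. f w)"

end

theory Submission
  imports Defs
begin

lemma supp_mono: "supp (mono w) = {w}" by (auto simp: supp_def mono_def)
lemma is_poly_mono: "is_poly (mono w)" by (simp add: is_poly_def supp_mono)

lemma app_sub: assumes "finite A" "supp P \<subseteq> A" shows "app f P = (\<Sum>w\<in>A. P w * f w)"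
  unfolding app_def by (rule sum.mono_neutral_left) (use assms in \<open>auto simp: supp_def\<close>)

lemma app_mono: "app f (mono w) = f w"
  by (simp add: app_def supp_mono) (simp add: mono_def)

lemma app_add_fun: "app (\<lambda>w. f w + g w) P = app f P + app g P"
  by (simp add: app_def sum.distrib algebra_simps)

lemma pmult_mono_left:
  "pmult (mono u) Q w = (if take (length u) w = u then Q (drop (length u) w) else 0)"
proof -
  have "pmult (mono u) Q w = (\<Sum>i\<le>length w. if i = length u then (if take (length u) w = u then Q (drop (length u) w) else 0) else 0)"
    unfolding pmult_def mono_def
    by (rule sum.cong) auto
  also have "\<dots> = (if take (length u) w = u then Q (drop (length u) w) else 0)"
    by (auto simp: sum.delta dest: arg_cong[where f=length])
  finally show ?thesis .
qed

lemma pmult_diff_left: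
  "pmult (\<lambda>v. P1 v - c * P2 v) Q w = pmult P1 Q w - c * pmult P2 Q w"
  unfolding pmult_def by (simp add: sum_subtractf sum_distrib_left algebra_simps)

definition cen :: "(word \<Rightarrow> complex) \<Rightarrow> word \<Rightarrow> cpoly" where
  "cen ps U = (\<lambda>w. mono U w - ps U * mono [] w)"

lemma pmult_cen:
  "pmult (cen ps U) Q w = (if take (length U) w = U then Q (drop (length U) w) else 0) - ps U * Q w"
  unfolding cen_def by (simp add: pmult_diff_left pmult_mono_left)

lemma supp_pmult: "supp (pmult P Q) \<subseteq> (\<lambda>(u,v). u @ v) ` (supp P \<times> supp Q)"
proof
  fix w assume "w \<in> supp (pmult P Q)"
  then have "(\<Sum>i\<le>length w. P (take i w) * Q (drop i w)) \<noteq> 0" by (simp add: supp_def pmult_def)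
  then obtain i where "P (take i w) * Q (drop i w) \<noteq> 0" by (meson sum.neutral)
  moreover have "w = take i w @ drop i w" by simp
  ultimately show "w \<in> (\<lambda>(u,v). u @ v) ` (supp P \<times> supp Q)"
    unfolding supp_def image_iff by (intro bexI[where x="(take i w, drop i w)"]) auto
qed

lemma is_poly_pmult: "is_poly P \<Longrightarrow> is_poly Q \<Longrightarrow> is_poly (pmult P Q)"
  unfolding is_poly_def by (rule finite_subset[OF supp_pmult]) auto

lemma is_poly_cen: "is_poly (cen ps U)"
proof -
  have "supp (cen ps U) \<subseteq> {U, []}" by (auto simp: supp_def cen_def mono_def)
  then show ?thesis unfolding is_poly_def by (rule finite_subset) auto
qed

lemma app_pmult_cen:
  assumes Q: "is_poly Q"
  shows "app f (pmult (cen ps U) Q) = app (\<lambda>w. f (U @ w)) Q - ps U * app f Q"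
proof -
  let ?S = "supp Q"
  let ?I = "(\<lambda>v. U @ v) ` ?S"
  define A where "A = ?S \<union> ?I"
  have fS: "finite ?S" using Q by (simp add: is_poly_def)
  have fA: "finite A" using fS by (simp add: A_def)
  have sub: "supp (pmult (cen ps U) Q) \<subseteq> A"
  proof
    fix w assume "w \<in> supp (pmult (cen ps U) Q)"
    then have ne: "(if take (length U) w = U then Q (drop (length U) w) else 0) - ps U * Q w \<noteq> 0"
      by (simp add: supp_def pmult_cen)
    show "w \<in> A"
    proof (cases "Q w = 0")
      case True
      with ne have "take (length U) w = U" "Q (drop (length U) w) \<noteq> 0" by (auto split: if_splits)
      then have "w = U @ drop (length U) w" by (metis append_take_drop_id)
      moreover have "drop (length U) w \<in> ?S" using \<open>Q (drop (length U) w) \<noteq> 0\<close> by (simp add: supp_def)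
      ultimately show ?thesis unfolding A_def by blast
    next
      case False then show ?thesis by (simp add: A_def supp_def)
    qed
  qed
  have "app f (pmult (cen ps U) Q) = (\<Sum>w\<in>A. pmult (cen ps U) Q w * f w)"
    by (rule app_sub[OF fA sub])
  also have "\<dots> = (\<Sum>w\<in>A. (if take (length U) w = U then Q (drop (length U) w) else 0) * f w)
       - ps U * (\<Sum>w\<in>A. Q w * f w)"
    by (simp add: pmult_cen sum_subtractf sum_distrib_left algebra_simps)
  also have "(\<Sum>w\<in>A. Q w * f w) = app f Q"
    by (rule app_sub[symmetric, OF fA]) (auto simp: A_def)
  also have "(\<Sum>w\<in>A. (if take (length U) w = U then Q (drop (length U) w) else 0) * f w)
      = (\<Sum>w\<in>?I. (if take (length U) w = U then Q (drop (length U) w) else 0) * f w)"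
  proof (rule sum.mono_neutral_right[OF fA])
    show "?I \<subseteq> A" by (auto simp: A_def)
    show "\<forall>w\<in>A - ?I. (if take (length U) w = U then Q (drop (length U) w) else 0) * f w = 0"
    proof
      fix w assume w: "w \<in> A - ?I"
      show "(if take (length U) w = U then Q (drop (length U) w) else 0) * f w = 0"
      proof (cases "take (length U) w = U")
        case True
        then have "w = U @ drop (length U) w" by (metis append_take_drop_id)
        with w have "drop (length U) w \<notin> ?S" by blast
        then show ?thesis by (simp add: supp_def)
      qed simp
    qed
  qed
  also have "\<dots> = (\<Sum>v\<in>?S. Q v * f (U @ v))"
    by (subst sum.reindex) (auto simp: inj_on_def)
  also have "\<dots> = app (\<lambda>w. f (U @ w)) Q" by (simp add: app_def)
  finally show ?thesis .
qed

fun evp :: "(word \<Rightarrow> complex) \<Rightarrow> (word \<Rightarrow> complex) \<Rightarrow> word list \<Rightarrow> complex" where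
  "evp ps f [] = f []"
| "evp ps f (U # Us) = evp ps (\<lambda>w. f (U @ w)) Us - ps U * evp ps f Us"

lemma is_poly_pprod_cen: "is_poly (pprod (map (cen ps) bs))"
  by (induction bs) (auto simp: is_poly_mono is_poly_pmult is_poly_cen)

lemma app_pprod_cen: "app f (pprod (map (cen ps) bs)) = evp ps f bs"
  by (induction bs arbitrary: f) (auto simp: app_mono app_pmult_cen is_poly_pprod_cen)

lemma pmult_mono_mono: "pmult (mono u) (mono v) = mono (u @ v)"
proof (rule ext)
  fix w show "pmult (mono u) (mono v) w = mono (u @ v) w"
    unfolding pmult_mono_left by (auto simp: mono_def append_eq_conv_conj) (metis append_take_drop_id)
qed

lemma pprod_map_mono: "pprod (map mono ws) = mono (concat ws)"
  by (induction ws) (auto simp: pmult_mono_mono)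

lemma pprod_map_letters: "pprod (map (\<lambda>z. mono [z]) w) = mono w"
  using pprod_map_mono[of "map (\<lambda>z. [z]) w"] by (simp add: comp_def)

lemma blocks_nil_iff [simp]: "blocks w = [] \<longleftrightarrow> w = []"
  by (cases w) (auto split: list.split)

lemma concat_blocks [simp]: "concat (blocks w) = w"
  by (induction w) (auto split: list.split)

definition valid :: "word list \<Rightarrow> bool" where
  "valid bs \<longleftrightarrow> (\<forall>U\<in>set bs. U \<noteq> [] \<and> set U \<subseteq> {hd U}) \<and> successively (\<lambda>U V. hd U \<noteq> hd V) bs"

lemma hd_hd_blocks: "w \<noteq> [] \<Longrightarrow> hd (hd (blocks w)) = hd w"
  by (induction w) (auto split: list.split)

lemma valid_blocks: "valid (blocks w)"
proof (induction w)
  case Nil then show ?case by (simp add: valid_def)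
next
  case (Cons a w)
  show ?case
  proof (cases "blocks w")
    case Nil then show ?thesis by (simp add: valid_def)
  next
    case (Cons b bs)
    with Cons.IH show ?thesis
      by (auto simp: valid_def successively_Cons)
  qed
qed

lemma valid_Cons: "valid (U # bs) \<longleftrightarrow> U \<noteq> [] \<and> set U \<subseteq> {hd U} \<and> valid bs \<and> (bs = [] \<or> hd U \<noteq> hd (hd bs))"
  by (auto simp: valid_def successively_Cons)

lemma valid_append: "valid (xs @ ys) \<longleftrightarrow> valid xs \<and> valid ys \<and> (xs = [] \<or> ys = [] \<or> hd (last xs) \<noteq> hd (hd ys))"
  by (auto simp: valid_def successively_append_iff)

lemma valid_take: "valid bs \<Longrightarrow> valid (take k bs)"
  using valid_append[of "take k bs" "drop k bs"] by simp

lemma valid_drop: "valid bs \<Longrightarrow> valid (drop k bs)"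
  using valid_append[of "take k bs" "drop k bs"] by simp

lemma valid_butlast: "valid bs \<Longrightarrow> valid (butlast bs)"
  by (simp add: butlast_conv_take valid_take)

lemma blocks_app_const:
  assumes "U \<noteq> []" "set U \<subseteq> {x}" "w = [] \<or> hd w \<noteq> x"
  shows "blocks (U @ w) = U # blocks w"
  using assms
proof (induction U)
  case Nil then show ?case by simp
next
  case (Cons y U)
  show ?case
  proof (cases "U = []")
    case True
    then show ?thesis using Cons.prems
      using hd_hd_blocks[of w] by (cases "w = []") (auto split: list.split)
  next
    case False
    with Cons.IH Cons.prems have "blocks (U @ w) = U # blocks w" by auto
    moreover have "hd U = y" using Cons.prems False by (cases U) auto
    ultimately show ?thesis by simp
  qed
qed

lemma blocks_concat: "valid bs \<Longrightarrow> blocks (concat bs) = bs"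
proof (induction bs)
  case Nil then show ?case by simp
next
  case (Cons U bs)
  then have v: "U \<noteq> []" "set U \<subseteq> {hd U}" "valid bs" "bs = [] \<or> hd U \<noteq> hd (hd bs)"
    by (auto simp: valid_Cons)
  have "concat bs = [] \<or> hd (concat bs) \<noteq> hd U"
  proof (cases bs)
    case (Cons b bs')
    with v have "b \<noteq> []" by (auto simp: valid_Cons)
    with Cons v show ?thesis by auto
  qed simp
  then have "blocks (U @ concat bs) = U # blocks (concat bs)"
    using blocks_app_const[OF v(1) v(2)] by auto
  with Cons.IH v show ?case by simp
qed

lemma blocks_elem: "U \<in> set (blocks w) \<Longrightarrow> U \<noteq> [] \<and> set U \<subseteq> {hd U}"
  using valid_blocks[of w] by (auto simp: valid_def)

lemma const_last: "U \<noteq> [] \<Longrightarrow> set U \<subseteq> {hd U} \<Longrightarrow> last U = hd U"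
  using last_in_set by fastforce

lemma const_rep: "set U \<subseteq> {x} \<Longrightarrow> U = replicate (length U) x"
  by (metis in_mono replicate_length_same singletonD)


declare bcum.simps[simp del]

section \<open>Walks\<close>

type_synonym trans = "letter \<Rightarrow> word \<Rightarrow> (word \<times> complex) list"

definition tf :: "trans \<Rightarrow> letter \<Rightarrow> (word \<Rightarrow> complex) \<Rightarrow> word \<Rightarrow> complex" where
  "tf tr a g V = (\<Sum>(V', c)\<leftarrow>tr a V. c * g V')"

fun wk :: "trans \<Rightarrow> word \<Rightarrow> (word \<Rightarrow> complex) \<Rightarrow> word \<Rightarrow> complex" where
  "wk tr [] g = g"
| "wk tr (a # P) g = wk tr P (tf tr a g)"

definition qtr :: "trans \<Rightarrow> trans" where
  "qtr tr a V = filter (\<lambda>(V', c). V' \<noteq> []) (tr a V)"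

definition amp :: "trans \<Rightarrow> word \<Rightarrow> complex" where
  "amp tr W = wk tr W eps []"

definition exc :: "trans \<Rightarrow> word \<Rightarrow> complex" where
  "exc tr W = (case W of [] \<Rightarrow> 0 | a # P \<Rightarrow> wk (qtr tr) P (tf tr a eps) [])"

lemma sum_list_lin:
  fixes g1 g2 :: "word \<Rightarrow> complex"
  shows "(\<Sum>(V', d)\<leftarrow>L. d * (g1 V' + c * g2 V')) = (\<Sum>(V', d)\<leftarrow>L. d * g1 V') + c * (\<Sum>(V', d)\<leftarrow>L. d * g2 V')"
  by (induction L) (auto simp: algebra_simps)

lemma tf_lin: "tf tr a (\<lambda>V. g1 V + c * g2 V) = (\<lambda>V. tf tr a g1 V + c * tf tr a g2 V)"
  unfolding tf_def by (rule ext) (rule sum_list_lin)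

lemma wk_lin: "wk tr P (\<lambda>V. g1 V + c * g2 V) V0 = wk tr P g1 V0 + c * wk tr P g2 V0"
  by (induction P arbitrary: g1 g2 V0) (auto simp: tf_lin)

lemma sum_list_zero': "(\<Sum>(V', d)\<leftarrow>(L::(word \<times> complex) list). d * (0::complex)) = 0"
  by (induction L) auto

lemma sum_list_zero'': "(\<Sum>(V', d)\<leftarrow>(L::(word \<times> complex) list). (0::complex)) = 0"
  by (induction L) auto

lemma tf_zero: "tf tr a (\<lambda>V. 0) = (\<lambda>V. 0)"
  unfolding tf_def by (rule ext) (simp add: sum_list_zero' sum_list_zero'')

lemma wk_zero: "wk tr P (\<lambda>V. 0) V0 = 0"
proof (induction P arbitrary: V0)
  case Nil then show ?case by simp
next
  case (Cons a P)
  have "tf tr a (\<lambda>V. 0) = (\<lambda>V. 0)" unfolding tf_def by (auto simp: sum_list_zero' sum_list_zero'')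
  with Cons show ?case by simp
qed

lemma sum_list_split:
  fixes g :: "word \<Rightarrow> complex"
  shows "(\<Sum>(V', d)\<leftarrow>L. d * g V') = (\<Sum>(V', d)\<leftarrow>filter (\<lambda>(V', c). V' \<noteq> []) L. d * g V') + g [] * (\<Sum>(V', d)\<leftarrow>L. d * eps V')"
  by (induction L) (auto simp: algebra_simps eps_def)

lemma tf_split: "tf tr a g V = tf (qtr tr) a g V + g [] * tf tr a eps V"
  unfolding tf_def qtr_def by (rule sum_list_split)

lemma wk_snoc: "wk tr (P @ [b]) g = tf tr b (wk tr P g)"
  by (induction P arbitrary: g) auto

lemma wk_D1:
  "wk tr W g [] = (\<Sum>i\<le>length W. wk (qtr tr) (take i W) g [] * amp tr (drop i W))"
proof (induction W arbitrary: g)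
  case Nil then show ?case by (simp add: amp_def eps_def)
next
  case (Cons a W)
  have "wk tr (a # W) g [] = wk tr W (\<lambda>V. tf (qtr tr) a g V + g [] * tf tr a eps V) []"
  proof -
    have "tf tr a g = (\<lambda>V. tf (qtr tr) a g V + g [] * tf tr a eps V)" by (rule ext) (rule tf_split)
    then show ?thesis by simp
  qed
  also have "\<dots> = wk tr W (tf (qtr tr) a g) [] + g [] * wk tr W (tf tr a eps) []"
    by (rule wk_lin)
  also have "wk tr W (tf tr a eps) [] = amp tr (a # W)" by (simp add: amp_def)
  also have "wk tr W (tf (qtr tr) a g) [] = (\<Sum>i\<le>length W. wk (qtr tr) (take i W) (tf (qtr tr) a g) [] * amp tr (drop i W))"
    by (rule Cons.IH)
  also have "\<dots> = (\<Sum>i\<le>length W. wk (qtr tr) (take (Suc i) (a # W)) g [] * amp tr (drop (Suc i) (a # W)))"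
    by simp
  also have "(\<Sum>i\<le>length W. wk (qtr tr) (take (Suc i) (a # W)) g [] * amp tr (drop (Suc i) (a # W))) + g [] * amp tr (a # W)
     = (\<Sum>i\<le>Suc (length W). wk (qtr tr) (take i (a # W)) g [] * amp tr (drop i (a # W)))"
    by (simp only: sum.atMost_Suc_shift) (simp add: algebra_simps)
  finally show ?case by simp
qed

lemma amp_nil [simp]: "amp tr [] = 1" by (simp add: amp_def eps_def)

lemma bool_dec:
  assumes "W \<noteq> []"
  shows "amp tr W = (\<Sum>j\<in>{1..length W}. exc tr (take j W) * amp tr (drop j W))"
proof -
  obtain a P where W: "W = a # P" using assms by (cases W) auto
  have "amp tr W = wk tr P (tf tr a eps) []" by (simp add: W amp_def)
  also have "\<dots> = (\<Sum>i\<le>length P. wk (qtr tr) (take i P) (tf tr a eps) [] * amp tr (drop i P))"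
    by (rule wk_D1)
  also have "\<dots> = (\<Sum>i\<le>length P. exc tr (take (Suc i) W) * amp tr (drop (Suc i) W))"
    by (simp add: W exc_def)
  also have "\<dots> = (\<Sum>j\<in>{1..length W}. exc tr (take j W) * amp tr (drop j W))"
  proof -
    have "{1..length W} = Suc ` {..length P}" 
    proof (rule set_eqI)
      fix x show "x \<in> {1..length W} \<longleftrightarrow> x \<in> Suc ` {..length P}" by (cases x) (auto simp: W)
    qed
    then show ?thesis by (simp add: sum.reindex)
  qed
  finally show ?thesis .
qed

section \<open>Letter-wise Boolean cumulants\<close>

definition lc :: "(word \<Rightarrow> complex) \<Rightarrow> word \<Rightarrow> complex" where
  "lc th W = bcum th (map (\<lambda>z. mono [z]) W)"

lemma lc_rec:
  assumes "W \<noteq> []"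
  shows "lc th W = th W - (\<Sum>k\<in>{1..<length W}. lc th (take k W) * th (drop k W))"
  unfolding lc_def
  apply (subst bcum.simps)
  using assms by (simp add: take_map drop_map pprod_map_letters app_mono)

lemma lc_exc:
  assumes amp: "\<And>W. amp tr W = th W"
  shows "W \<noteq> [] \<Longrightarrow> lc th W = exc tr W"
proof (induction "length W" arbitrary: W rule: less_induct)
  case less
  have th0: "th [] = 1" using amp[of "[]"] by simp
  have IH: "\<And>k. k \<in> {1..<length W} \<Longrightarrow> lc th (take k W) = exc tr (take k W)"
    using less by auto
  have "lc th W = th W - (\<Sum>k\<in>{1..<length W}. exc tr (take k W) * th (drop k W))"
    using lc_rec[OF less.prems] IH by simp
  also have "th W = (\<Sum>j\<in>{1..length W}. exc tr (take j W) * th (drop j W))"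
    using bool_dec[OF less.prems, of tr] by (simp add: amp)
  also have "\<dots> = (\<Sum>j\<in>{1..<length W}. exc tr (take j W) * th (drop j W)) + exc tr W"
  proof -
    have "{1..length W} = insert (length W) {1..<length W}" using less.prems by (cases W) auto
    then show ?thesis by (simp add: th0)
  qed
  finally show ?case by simp
qed


section \<open>The c-free Fock model\<close>

definition ev :: "(word \<Rightarrow> complex) \<Rightarrow> (word \<Rightarrow> complex) \<Rightarrow> (word \<Rightarrow> complex) \<Rightarrow> word list \<Rightarrow> complex" where
  "ev ph ps f bs = (if bs = [] then f [] else evp ps f bs + (ps (last bs) - ph (last bs)) * evp ps f (butlast bs))"

definition step :: "(word \<Rightarrow> complex) \<Rightarrow> (word \<Rightarrow> complex) \<Rightarrow> trans" where
  "step ph ps a V = (case blocks V of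
     [] \<Rightarrow> [([a], 1), ([], ph [a])]
   | U # bs \<Rightarrow> if hd U = a then
       (if bs = [] then [(a # U, 1), ([a], - ph U), ([], ph (a # U) - ph U * ph [a])]
        else [(a # V, 1), (a # concat bs, - ps U), (concat bs, ps (a # U) - ps U * ps [a])])
     else [(a # V, 1), (V, ps [a])])"

lemma ev_nil [simp]: "ev ph ps g [] = g []" by (simp add: ev_def)

lemma ev_single: "ev ph ps g [U] = g U - ph U * g []"
  by (simp add: ev_def algebra_simps)

lemma ev_cons: "bs \<noteq> [] \<Longrightarrow> ev ph ps g (U # bs) = ev ph ps (\<lambda>w. g (U @ w)) bs - ps U * ev ph ps g bs"
  by (cases "butlast bs") (auto simp: ev_def algebra_simps)

lemma valid_blocksV: "blocks V = U # bs \<Longrightarrow> U \<noteq> [] \<and> set U \<subseteq> {hd U} \<and> valid bs \<and> (bs = [] \<or> hd U \<noteq> hd (hd bs))"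
  using valid_blocks[of V] by (simp add: valid_Cons)

lemma concat_ne: "valid bs \<Longrightarrow> bs \<noteq> [] \<Longrightarrow> concat bs \<noteq> []"
  by (cases bs) (auto simp: valid_Cons)

lemma hd_concat_valid: "valid bs \<Longrightarrow> bs \<noteq> [] \<Longrightarrow> hd (concat bs) = hd (hd bs)"
  by (cases bs) (auto simp: valid_Cons)

lemma trans_ev:
  "tf (step ph ps) a (\<lambda>V. ev ph ps f (blocks V)) V = ev ph ps (\<lambda>w. f (a # w)) (blocks V)"
proof (cases "blocks V")
  case Nil
  then have "V = []" by simp
  then show ?thesis by (simp add: tf_def step_def ev_single)
next
  case (Cons U bs)
  note v = valid_blocksV[OF Cons]
  have V: "V = U @ concat bs" using concat_blocks[of V] Cons by simp
  show ?thesis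
  proof (cases "hd U = a")
    case hU: True
    show ?thesis
    proof (cases "bs = []")
      case True
      have b1: "blocks (a # U) = [a # U]" using Cons True hU V by simp
      show ?thesis using Cons True hU V b1
        by (simp add: tf_def step_def ev_single algebra_simps)
    next
      case False
      have b1: "blocks (a # V) = (a # U) # bs" using Cons hU by simp
      have b2: "blocks (concat bs) = bs" using v by (simp add: blocks_concat)
      have "hd (concat bs) \<noteq> a" using hd_concat_valid v False hU by auto
      then have "blocks ([a] @ concat bs) = [a] # blocks (concat bs)"
        by (intro blocks_app_const) auto
      then have b3: "blocks (a # concat bs) = [a] # bs" using b2 by simp
      have e1: "ev ph ps f ((a # U) # bs) = ev ph ps (\<lambda>w. f (a # U @ w)) bs - ps (a # U) * ev ph ps f bs"
        using ev_cons[OF False] by simp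
      have e2: "ev ph ps f ([a] # bs) = ev ph ps (\<lambda>w. f (a # w)) bs - ps [a] * ev ph ps f bs"
        using ev_cons[OF False, of ph ps f "[a]"] by simp
      have e3: "ev ph ps (\<lambda>w. f (a # w)) (U # bs) = ev ph ps (\<lambda>w. f (a # U @ w)) bs - ps U * ev ph ps (\<lambda>w. f (a # w)) bs"
        using ev_cons[OF False] by simp
      show ?thesis using Cons False hU b1 b2 b3
        by (simp add: tf_def step_def e1 e2 e3 algebra_simps)
    qed
  next
    case False
    have b1: "blocks (a # V) = [a] # U # bs" using Cons False by simp
    have e: "ev ph ps f ([a] # U # bs) = ev ph ps (\<lambda>w. f (a # w)) (U # bs) - ps [a] * ev ph ps f (U # bs)"
      using ev_cons[of "U # bs" ph ps f "[a]"] by simp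
    show ?thesis using Cons False b1 by (simp add: tf_def step_def e algebra_simps)
  qed
qed

definition good :: "(word \<Rightarrow> complex) \<Rightarrow> (word \<Rightarrow> complex) \<Rightarrow> bool" where
  "good ph ps \<longleftrightarrow> (\<forall>V. ev ph ps ph (blocks V) = eps V)"

lemma realize:
  "wk (step ph ps) W (\<lambda>V. ev ph ps f (blocks V)) = (\<lambda>V. ev ph ps (\<lambda>w. f (W @ w)) (blocks V))"
proof (induction W arbitrary: f)
  case Nil then show ?case by simp
next
  case (Cons a W)
  have "tf (step ph ps) a (\<lambda>V. ev ph ps f (blocks V)) = (\<lambda>V. ev ph ps (\<lambda>w. f (a # w)) (blocks V))"
    by (rule ext) (rule trans_ev)
  then show ?case using Cons.IH[of "\<lambda>w. f (a # w)"] by simp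
qed

lemma amp_good: assumes "good ph ps" shows "amp (step ph ps) W = ph W"
proof -
  have "eps = (\<lambda>V. ev ph ps ph (blocks V))" using assms by (auto simp: good_def)
  then have "amp (step ph ps) W = wk (step ph ps) W (\<lambda>V. ev ph ps ph (blocks V)) []"
    by (simp add: amp_def)
  also have "\<dots> = ph W" by (simp add: realize)
  finally show ?thesis .
qed

lemma lc_good: "good ph ps \<Longrightarrow> W \<noteq> [] \<Longrightarrow> lc ph W = exc (step ph ps) W"
  using lc_exc[of "step ph ps" ph] amp_good by blast

section \<open>From c-freeness to goodness\<close>

lemma successively_nth: "successively P xs \<Longrightarrow> Suc i < length xs \<Longrightarrow> P (xs ! i) (xs ! Suc i)"
proof (induction xs arbitrary: i)
  case (Cons x xs)
  then show ?case by (cases i) (auto simp: successively_Cons hd_conv_nth)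
qed simp

lemma pmult_mono_nil_right: "pmult P (mono []) = P"
proof (rule ext)
  fix w
  have "pmult P (mono []) w = (\<Sum>i\<le>length w. if i = length w then P w else 0)"
    unfolding pmult_def mono_def by (rule sum.cong) auto
  then show "pmult P (mono []) w = P w" by simp
qed

lemma app_cen: "app f (cen ps U) = f U - ps U * f []"
  using app_pprod_cen[of f ps "[U]"] by (simp add: pmult_mono_nil_right)

lemma alternating_cen:
  assumes "valid bs"
  shows "alternating (map hd bs) (map (cen ps) bs)"
  unfolding alternating_def
proof (intro conjI allI impI)
  fix i assume i: "i < length (map (cen ps) bs)"
  then have U: "bs ! i \<in> set bs" by simp
  with assms have s: "set (bs ! i) \<subseteq> {hd (bs ! i)}" by (auto simp: valid_def)
  have "\<forall>w. cen ps (bs ! i) w \<noteq> 0 \<longrightarrow> set w \<subseteq> {hd (bs ! i)}"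
    using s by (auto simp: cen_def mono_def)
  then show "in_alg (map hd bs ! i) (map (cen ps) bs ! i)"
    using i by (simp add: in_alg_def is_poly_cen)
next
  fix i assume "Suc i < length (map hd bs)"
  then show "map hd bs ! i \<noteq> map hd bs ! Suc i"
    using successively_nth[of _ bs i] assms by (auto simp: valid_def)
qed simp

lemma cfree_evp:
  assumes cf: "c_free phi psi" and up: "unital phi" and us: "unital psi"
    and v: "valid bs" and ne: "bs \<noteq> []"
  shows "evp psi phi bs = (\<Prod>U\<leftarrow>bs. phi U - psi U)"
proof -
  have cent: "\<forall>u\<in>set (map (cen psi) bs). app psi u = 0"
    using us by (auto simp: app_cen unital_def)
  have "app phi (pprod (map (cen psi) bs)) = (\<Prod>u\<leftarrow>map (cen psi) bs. app phi u)"
    using cf ne alternating_cen[OF v] cent unfolding c_free_def by blast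
  also have "\<dots> = (\<Prod>U\<leftarrow>bs. phi U - psi U)"
    using up by (simp add: app_cen unital_def comp_def)
  finally show ?thesis by (simp add: app_pprod_cen)
qed

lemma free_evp:
  assumes fr: "free_wrt psi" and us: "unital psi" and v: "valid bs" and ne: "bs \<noteq> []"
  shows "evp psi psi bs = 0"
proof -
  have cent: "\<forall>u\<in>set (map (cen psi) bs). app psi u = 0"
    using us by (auto simp: app_cen unital_def)
  have "app psi (pprod (map (cen psi) bs)) = 0"
    using fr ne alternating_cen[OF v] cent unfolding free_wrt_def by blast
  then show ?thesis by (simp add: app_pprod_cen)
qed

lemma good_cfree:
  assumes cf: "c_free phi psi" and up: "unital phi" and us: "unital psi"
  shows "good phi psi"
  unfolding good_def
proof
  fix V
  show "ev phi psi phi (blocks V) = eps V"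
  proof (cases "V = []")
    case True then show ?thesis using up by (simp add: unital_def eps_def)
  next
    case False
    define bs where "bs = blocks V"
    have v: "valid bs" and ne: "bs \<noteq> []" using False valid_blocks by (auto simp: bs_def)
    have bs: "bs = butlast bs @ [last bs]" using ne by simp
    have e1: "evp psi phi bs = (\<Prod>U\<leftarrow>butlast bs. phi U - psi U) * (phi (last bs) - psi (last bs))"
    proof -
      have "(\<Prod>U\<leftarrow>butlast bs @ [last bs]. phi U - psi U) = (\<Prod>U\<leftarrow>butlast bs. phi U - psi U) * (phi (last bs) - psi (last bs))"
        by simp
      then show ?thesis using cfree_evp[OF cf up us v ne] bs by simp
    qed
    have e2: "evp psi phi (butlast bs) = (\<Prod>U\<leftarrow>butlast bs. phi U - psi U)"
    proof (cases "butlast bs = []")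
      case True then show ?thesis using up by (simp add: unital_def)
    next
      case False then show ?thesis using cfree_evp[OF cf up us valid_butlast[OF v]] by simp
    qed
    show ?thesis using ne False unfolding bs_def[symmetric] by (simp add: ev_def e1 e2 eps_def algebra_simps)
  qed
qed

lemma good_free:
  assumes fr: "free_wrt psi" and us: "unital psi"
  shows "good psi psi"
  unfolding good_def
proof
  fix V
  show "ev psi psi psi (blocks V) = eps V"
  proof (cases "V = []")
    case True then show ?thesis using us by (simp add: unital_def eps_def)
  next
    case False
    then show ?thesis using free_evp[OF fr us valid_blocks] by (simp add: ev_def eps_def)
  qed
qed

section \<open>Vanishing of mixed letter cumulants\<close>

lemma step_last:
  assumes "V \<noteq> []" "(V', c) \<in> set (step ph ps a V)" "V' \<noteq> []"
  shows "last V' = last V"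
proof -
  obtain U bs where Cons: "blocks V = U # bs" using assms(1) by (cases "blocks V") auto
  note v = valid_blocksV[OF Cons]
  have V: "V = U @ concat bs" using concat_blocks[of V] Cons by simp
  have lU: "last U = hd U" using v const_last by blast
  show ?thesis
  proof (cases "bs = []")
    case True
    then have "V = U" using V by simp
    from assms(2) have "V' = a # U \<or> (V' = [a] \<and> hd U = a) \<or> V' = [] \<or> V' = a # V \<or> V' = V"
      by (auto simp: step_def Cons True split: if_splits)
    then show ?thesis using assms(3) \<open>V = U\<close> v lU by auto
  next
    case False
    then have ne: "concat bs \<noteq> []" using v concat_ne by blast
    then have lV: "last V = last (concat bs)" using V by simp
    from assms(2) have "V' = a # V \<or> V' = a # concat bs \<or> V' = concat bs \<or> V' = V"
      by (auto simp: step_def Cons False split: if_splits)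
    then show ?thesis using ne lV assms(1) by auto
  qed
qed

lemma step_nil_target:
  assumes "V \<noteq> []" "([], c) \<in> set (step ph ps a V)"
  shows "last V = a"
proof -
  obtain U bs where Cons: "blocks V = U # bs" using assms(1) by (cases "blocks V") auto
  note v = valid_blocksV[OF Cons]
  have V: "V = U @ concat bs" using concat_blocks[of V] Cons by simp
  have lU: "last U = hd U" using v const_last by blast
  show ?thesis
  proof (cases "bs = []")
    case True then show ?thesis using assms Cons V v lU by (auto simp: step_def split: if_splits)
  next
    case False
    then have "concat bs \<noteq> []" using v concat_ne by blast
    then show ?thesis using assms Cons V v lU False by (auto simp: step_def split: if_splits)
  qed
qed

lemma sum_list_vanish:
  fixes g :: "word \<Rightarrow> complex"
  shows "(\<And>V' d. (V', d) \<in> set L \<Longrightarrow> g V' = 0) \<Longrightarrow> (\<Sum>(V', d)\<leftarrow>L. d * g V') = 0"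
  by (induction L) (simp, fastforce)

lemma wkq_vanish:
  assumes "V0 \<noteq> []" "\<And>V. V \<noteq> [] \<Longrightarrow> last V = last V0 \<Longrightarrow> g V = 0"
  shows "wk (qtr (step ph ps)) P g V0 = 0"
  using assms(2)
proof (induction P arbitrary: g)
  case Nil then show ?case using assms(1) by simp
next
  case (Cons a P)
  have "tf (qtr (step ph ps)) a g V = 0" if "V \<noteq> []" "last V = last V0" for V
    unfolding tf_def qtr_def
    by (rule sum_list_vanish) (use that step_last Cons.prems in auto)
  then show ?case using Cons.IH by simp
qed

lemma exc_vanish:
  assumes "W \<noteq> []" "hd W \<noteq> last W"
  shows "exc (step ph ps) W = 0"
proof -
  obtain a P where W: "W = a # P" using assms by (cases W) auto
  with assms have "P \<noteq> []" by auto
  then obtain P' b where P: "P = P' @ [b]" by (cases P rule: rev_cases) auto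
  have ab: "b \<noteq> a" using assms W P by simp
  let ?h = "tf (step ph ps) a eps"
  have h0: "?h V = 0" if "V \<noteq> []" "last V = b" for V
    unfolding tf_def
    by (rule sum_list_vanish) (use that step_nil_target ab in \<open>force simp: eps_def\<close>)
  have "exc (step ph ps) W = tf (qtr (step ph ps)) b (wk (qtr (step ph ps)) P' ?h) []"
    by (simp add: exc_def W P wk_snoc)
  also have "\<dots> = wk (qtr (step ph ps)) P' ?h [b]"
    by (simp add: tf_def qtr_def step_def)
  also have "\<dots> = 0" by (rule wkq_vanish) (use h0 in auto)
  finally show ?thesis .
qed


section \<open>Block cumulants versus letter cumulants\<close>

definition PB :: "word \<Rightarrow> nat set" where
  "PB W = {i. 0 < i \<and> i < length W \<and> W ! (i - 1) \<noteq> W ! i}"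

lemma PB_finite [simp]: "finite (PB W)" by (auto simp: PB_def)

lemma const_nth: "set U \<subseteq> {x} \<Longrightarrow> k < length U \<Longrightarrow> U ! k = x"
  using nth_mem by fastforce

lemma PB_append:
  assumes v: "valid (U # bs)"
  shows "PB (U @ concat bs) = (if bs = [] then {} else {length U}) \<union> (\<lambda>i. i + length U) ` PB (concat bs)"
proof -
  from v have U: "U \<noteq> []" "set U \<subseteq> {hd U}" and vb: "valid bs" and h: "bs = [] \<or> hd U \<noteq> hd (hd bs)"
    by (auto simp: valid_Cons)
  let ?W = "concat bs"
  have Wne: "?W \<noteq> [] \<longleftrightarrow> bs \<noteq> []" using concat_ne[OF vb] by auto
  show ?thesis
  proof (rule set_eqI)
    fix i
    show "i \<in> PB (U @ ?W) \<longleftrightarrow> i \<in> (if bs = [] then {} else {length U}) \<union> (\<lambda>i. i + length U) ` PB ?W"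
    proof (cases "i < length U")
      case True
      have "i - 1 < length U" using True by linarith
      then have "(U @ ?W) ! (i - 1) = hd U" using const_nth[OF U(2)] by (simp add: nth_append)
      moreover have "(U @ ?W) ! i = hd U" using True const_nth[OF U(2)] by (simp add: nth_append)
      ultimately have "i \<notin> PB (U @ ?W)" by (auto simp: PB_def)
      moreover have "i \<notin> (if bs = [] then {} else {length U}) \<union> (\<lambda>i. i + length U) ` PB ?W"
        using True by auto
      ultimately show ?thesis by blast
    next
      case False
      show ?thesis
      proof (cases "i = length U")
        case True
        have a: "(U @ ?W) ! (i - 1) = hd U" using True U const_nth[OF U(2)] by (simp add: nth_append)
        have b: "bs \<noteq> [] \<Longrightarrow> (U @ ?W) ! i = hd (hd bs)"
          using True Wne hd_concat_valid[OF vb] by (simp add: nth_append hd_conv_nth)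
        have "i \<notin> (\<lambda>i. i + length U) ` PB ?W" using True by (auto simp: PB_def)
        then show ?thesis using True a b h Wne U by (auto simp: PB_def)
      next
        case False2: False
        define j where "j = i - length U"
        have j: "i = j + length U" "0 < j" using False False2 by (auto simp: j_def)
        have "i - 1 = (j - 1) + length U" using j by simp
        then have a: "(U @ ?W) ! (i - 1) = ?W ! (j - 1)" by (simp add: nth_append)
        have b: "(U @ ?W) ! i = ?W ! j" using j by (simp add: nth_append)
        have "i \<in> (\<lambda>i. i + length U) ` PB ?W \<longleftrightarrow> j \<in> PB ?W" using j by auto
        then show ?thesis using a b j by (auto simp: PB_def)
      qed
    qed
  qed
qed

lemma reindex_blocks:
  "valid bs \<Longrightarrow> (\<Sum>k\<in>{1..<length bs}. F (concat (take k bs)) (concat (drop k bs)))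
     = (\<Sum>i\<in>PB (concat bs). F (take i (concat bs)) (drop i (concat bs)))"
proof (induction bs arbitrary: F)
  case Nil then show ?case by (simp add: PB_def)
next
  case (Cons U bs)
  from Cons.prems have vb: "valid bs" by (simp add: valid_Cons)
  let ?W = "concat bs"
  have L: "(\<Sum>k\<in>{1..<length (U # bs)}. F (concat (take k (U # bs))) (concat (drop k (U # bs))))
     = (if bs = [] then 0 else F U ?W) + (\<Sum>k\<in>{1..<length bs}. F (U @ concat (take k bs)) (concat (drop k bs)))"
  proof (cases "bs = []")
    case True then show ?thesis by simp
  next
    case False
    have e: "{1..<length (U # bs)} = insert 1 {Suc 1..<Suc (length bs)}" using False by (cases bs) auto
    have "(\<Sum>k\<in>{1..<length (U # bs)}. F (concat (take k (U # bs))) (concat (drop k (U # bs))))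
        = F U ?W + (\<Sum>k\<in>{Suc 1..<Suc (length bs)}. F (concat (take k (U # bs))) (concat (drop k (U # bs))))"
      unfolding e by (subst sum.insert) auto
    also have "(\<Sum>k\<in>{Suc 1..<Suc (length bs)}. F (concat (take k (U # bs))) (concat (drop k (U # bs))))
        = (\<Sum>k\<in>{1..<length bs}. F (U @ concat (take k bs)) (concat (drop k bs)))"
      by (simp only: sum.shift_bounds_Suc_ivl) simp
    finally show ?thesis using False by simp
  qed
  have R: "(\<Sum>i\<in>PB (U @ ?W). F (take i (U @ ?W)) (drop i (U @ ?W)))
     = (if bs = [] then 0 else F U ?W) + (\<Sum>i\<in>PB ?W. F (U @ take i ?W) (drop i ?W))"
  proof -
    have d: "(if bs = [] then {} else {length U}) \<inter> (\<lambda>i. i + length U) ` PB ?W = {}"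
      by (auto simp: PB_def)
    have "(\<Sum>i\<in>PB (U @ ?W). F (take i (U @ ?W)) (drop i (U @ ?W)))
       = (\<Sum>i\<in>(if bs = [] then {} else {length U}). F (take i (U @ ?W)) (drop i (U @ ?W)))
         + (\<Sum>i\<in>(\<lambda>i. i + length U) ` PB ?W. F (take i (U @ ?W)) (drop i (U @ ?W)))"
      unfolding PB_append[OF Cons.prems] by (rule sum.union_disjoint) (use d in auto)
    also have "(\<Sum>i\<in>(\<lambda>i. i + length U) ` PB ?W. F (take i (U @ ?W)) (drop i (U @ ?W)))
        = (\<Sum>i\<in>PB ?W. F (U @ take i ?W) (drop i ?W))"
      by (subst sum.reindex) (auto simp: inj_on_def)
    finally show ?thesis by simp
  qed
  show ?case using L R Cons.IH[OF vb, of "\<lambda>a b. F (U @ a) b"] by simp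
qed

lemma bb_rec:
  assumes "W \<noteq> []"
  shows "bb th W = th W - (\<Sum>i\<in>PB W. bb th (take i W) * th (drop i W))"
proof -
  define bs where "bs = blocks W"
  have v: "valid bs" using valid_blocks by (simp add: bs_def)
  have ne: "bs \<noteq> []" using assms by (simp add: bs_def)
  have W: "W = concat bs" by (simp add: bs_def)
  have k: "bcum th (take k (map mono bs)) = bb th (concat (take k bs))" if "k \<in> {1..<length bs}" for k
  proof -
    have "take k bs \<noteq> []" using that ne by auto
    then have c: "concat (take k bs) \<noteq> []" using concat_ne valid_take[OF v] by blast
    have "bb th (concat (take k bs)) = bcum th (map mono (take k bs))"
      unfolding bb_def if_not_P[OF c] blocks_concat[OF valid_take[OF v]] ..
    then show ?thesis by (simp add: take_map)
  qed
  have "bb th W = bcum th (map mono bs)" using assms by (simp add: bb_def bs_def)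
  also have "\<dots> = th W - (\<Sum>k\<in>{1..<length bs}. bcum th (take k (map mono bs)) * app th (pprod (drop k (map mono bs))))"
    by (subst bcum.simps) (simp add: ne pprod_map_mono app_mono W)
  also have "(\<Sum>k\<in>{1..<length bs}. bcum th (take k (map mono bs)) * app th (pprod (drop k (map mono bs))))
     = (\<Sum>k\<in>{1..<length bs}. bb th (concat (take k bs)) * th (concat (drop k bs)))"
    by (rule sum.cong) (simp_all add: k drop_map pprod_map_mono app_mono)
  also have "\<dots> = (\<Sum>i\<in>PB W. bb th (take i W) * th (drop i W))"
    unfolding W by (rule reindex_blocks[OF v])
  finally show ?thesis .
qed


lemma lc_moment:
  assumes th0: "th [] = 1" and ne: "W \<noteq> []"
  shows "th W = (\<Sum>j\<in>{1..length W}. lc th (take j W) * th (drop j W))"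
proof -
  have e: "{1..length W} = insert (length W) {1..<length W}" using ne by (cases W) auto
  have "(\<Sum>j\<in>{1..length W}. lc th (take j W) * th (drop j W))
     = lc th W * th [] + (\<Sum>j\<in>{1..<length W}. lc th (take j W) * th (drop j W))"
    unfolding e by (subst sum.insert) auto
  then show ?thesis using lc_rec[OF ne, of th] th0 by simp
qed

lemma PB_drop:
  assumes "j < length W"
  shows "{i \<in> PB W. j < i} = (\<lambda>i'. i' + j) ` PB (drop j W)"
proof (rule set_eqI)
  fix i
  show "i \<in> {i \<in> PB W. j < i} \<longleftrightarrow> i \<in> (\<lambda>i'. i' + j) ` PB (drop j W)"
  proof (cases "j < i")
    case True
    define k where "k = i - j"
    have i: "i = k + j" "0 < k" using True by (auto simp: k_def)
    have "i - 1 = (k - 1) + j" using i by simp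
    then have "W ! (i - 1) = drop j W ! (k - 1)" "W ! i = drop j W ! k" using i assms by (simp_all add: add.commute)
    moreover have "i \<in> (\<lambda>i'. i' + j) ` PB (drop j W) \<longleftrightarrow> k \<in> PB (drop j W)" using i by auto
    ultimately show ?thesis using i assms by (auto simp: PB_def)
  next
    case False then show ?thesis by (auto simp: PB_def)
  qed
qed

lemma G:
  assumes th0: "th [] = 1"
  shows "W \<noteq> [] \<Longrightarrow> bb th W = (\<Sum>j\<in>{1..length W} - PB W. lc th (take j W) * bb th (drop j W))"
proof (induction "length W" arbitrary: W rule: less_induct)
  case less
  define n where "n = length W"
  define NB where "NB i = {j\<in>{1..i}. j = i \<or> W ! (j - 1) = W ! j}" for i
  have NBn: "{1..n} - PB W = NB n" by (auto simp: NB_def PB_def n_def)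
  have NBsub: "NB i \<subseteq> {1..i}" for i by (auto simp: NB_def)
  have finNB: "finite (NB i)" for i using NBsub finite_subset by blast
  have IHi: "bb th (take i W) = (\<Sum>j\<in>NB i. lc th (take j W) * bb th (drop j (take i W)))" if i: "i \<in> PB W" for i
  proof -
    have i0: "0 < i" "i < length W" using i by (auto simp: PB_def)
    then have "take i W \<noteq> []" by auto
    then have "bb th (take i W) = (\<Sum>j\<in>{1..i} - PB (take i W). lc th (take j (take i W)) * bb th (drop j (take i W)))"
      using less.hyps[of "take i W"] i0 by simp
    also have "{1..i} - PB (take i W) = NB i"
    proof (rule set_eqI)
      fix x show "x \<in> {1..i} - PB (take i W) \<longleftrightarrow> x \<in> NB i"
        using i0 by (cases "x < i") (auto simp: NB_def PB_def)
    qed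
    also have "(\<Sum>j\<in>NB i. lc th (take j (take i W)) * bb th (drop j (take i W))) = (\<Sum>j\<in>NB i. lc th (take j W) * bb th (drop j (take i W)))"
      by (rule sum.cong) (auto simp: NB_def min_def)
    finally show ?thesis .
  qed
  have BM: "bb th W = th W - (\<Sum>i\<in>PB W. bb th (take i W) * th (drop i W))" by (rule bb_rec[OF less.prems])
  have LM: "th W = (\<Sum>j\<in>{1..n}. lc th (take j W) * th (drop j W))" unfolding n_def by (rule lc_moment[where th=th, OF th0 less.prems])
  have "(\<Sum>i\<in>PB W. bb th (take i W) * th (drop i W))
      = (\<Sum>i\<in>PB W. \<Sum>j\<in>NB i. lc th (take j W) * bb th (drop j (take i W)) * th (drop i W))"
    by (rule sum.cong) (simp_all add: IHi sum_distrib_right)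
  also have "\<dots> = (\<Sum>i\<in>PB W. \<Sum>j\<in>{j\<in>{1..n}. j \<in> NB i}. lc th (take j W) * bb th (drop j (take i W)) * th (drop i W))"
  proof (rule sum.cong[OF refl])
    fix i assume "i \<in> PB W"
    then have "i \<le> n" by (auto simp: PB_def n_def)
    then have "{j\<in>{1..n}. j \<in> NB i} = NB i" using NBsub[of i] by auto
    then show "(\<Sum>j\<in>NB i. lc th (take j W) * bb th (drop j (take i W)) * th (drop i W))
       = (\<Sum>j\<in>{j\<in>{1..n}. j \<in> NB i}. lc th (take j W) * bb th (drop j (take i W)) * th (drop i W))" by simp
  qed
  also have "\<dots> = (\<Sum>j\<in>{1..n}. \<Sum>i\<in>{i\<in>PB W. j \<in> NB i}. lc th (take j W) * bb th (drop j (take i W)) * th (drop i W))"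
    by (rule sum.swap_restrict) auto
  finally have S: "(\<Sum>i\<in>PB W. bb th (take i W) * th (drop i W))
      = (\<Sum>j\<in>{1..n}. lc th (take j W) * (\<Sum>i\<in>{i\<in>PB W. j \<in> NB i}. bb th (drop j (take i W)) * th (drop i W)))"
    by (simp add: sum_distrib_left mult.assoc)
  have K: "th (drop j W) = (if j \<in> NB n then bb th (drop j W) else 0)
           + (\<Sum>i\<in>{i\<in>PB W. j \<in> NB i}. bb th (drop j (take i W)) * th (drop i W))"
    if j: "j \<in> {1..n}" for j
  proof -
    consider (a) "j = n" | (b) "j < n" "W ! (j - 1) \<noteq> W ! j" | (c) "j < n" "W ! (j - 1) = W ! j"
      using j by fastforce
    then show ?thesis
    proof cases
      case a
      have e: "{i\<in>PB W. j \<in> NB i} = {}" using a NBsub by (fastforce simp: PB_def n_def)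
      have "j \<in> NB n" using a j by (auto simp: NB_def)
      then show ?thesis unfolding e using a th0 by (simp add: n_def bb_def)
    next
      case b
      have e: "{i\<in>PB W. j \<in> NB i} = {j}" using b j by (auto simp: PB_def NB_def n_def)
      have "j \<notin> NB n" using b by (auto simp: NB_def)
      then show ?thesis unfolding e by (simp add: bb_def)
    next
      case c
      define V where "V = drop j W"
      have Vne: "V \<noteq> []" using c by (simp add: V_def n_def)
      have set: "{i\<in>PB W. j \<in> NB i} = {i \<in> PB W. j < i}"
        using c j by (auto simp: PB_def NB_def n_def) (metis le_neq_implies_less)
      have "(\<Sum>i\<in>{i\<in>PB W. j \<in> NB i}. bb th (drop j (take i W)) * th (drop i W))
          = (\<Sum>i\<in>(\<lambda>i'. i' + j) ` PB V. bb th (drop j (take i W)) * th (drop i W))"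
        unfolding set V_def using c by (simp add: PB_drop n_def)
      also have "\<dots> = (\<Sum>i'\<in>PB V. bb th (take i' V) * th (drop i' V))"
        by (subst sum.reindex) (auto simp: inj_on_def V_def drop_take add.commute)
      also have "\<dots> = th V - bb th V" using bb_rec[OF Vne, of th] by simp
      finally show ?thesis using c j by (simp add: V_def NB_def)
    qed
  qed
  have "th W = (\<Sum>j\<in>{1..n}. lc th (take j W) * (if j \<in> NB n then bb th (drop j W) else 0))
      + (\<Sum>i\<in>PB W. bb th (take i W) * th (drop i W))"
  proof -
    have "(\<Sum>j\<in>{1..n}. lc th (take j W) * th (drop j W))
       = (\<Sum>j\<in>{1..n}. lc th (take j W) * (if j \<in> NB n then bb th (drop j W) else 0)
          + lc th (take j W) * (\<Sum>i\<in>{i\<in>PB W. j \<in> NB i}. bb th (drop j (take i W)) * th (drop i W)))"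
    proof (rule sum.cong[OF refl])
      fix j assume "j \<in> {1..n}"
      from K[OF this] show "lc th (take j W) * th (drop j W) = lc th (take j W) * (if j \<in> NB n then bb th (drop j W) else 0)
          + lc th (take j W) * (\<Sum>i\<in>{i\<in>PB W. j \<in> NB i}. bb th (drop j (take i W)) * th (drop i W))"
        by (simp add: algebra_simps)
    qed
    then show ?thesis unfolding LM S by (simp add: sum.distrib)
  qed
  moreover have "(\<Sum>j\<in>{1..n}. lc th (take j W) * (if j \<in> NB n then bb th (drop j W) else 0))
      = (\<Sum>j\<in>NB n. lc th (take j W) * bb th (drop j W))"
  proof -
    have "(\<Sum>j\<in>{1..n}. lc th (take j W) * (if j \<in> NB n then bb th (drop j W) else 0))
        = (\<Sum>j\<in>{1..n}. if j \<in> NB n then lc th (take j W) * bb th (drop j W) else 0)"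
      by (rule sum.cong) auto
    also have "\<dots> = (\<Sum>j\<in>{1..n} \<inter> NB n. lc th (take j W) * bb th (drop j W))"
      by (simp add: sum.inter_restrict)
    also have "{1..n} \<inter> NB n = NB n" using NBsub by auto
    finally show ?thesis .
  qed
  ultimately show ?case using BM NBn by (simp add: n_def)
qed


lemma lc_van:
  assumes "good ph ps" "w \<noteq> []" "hd w \<noteq> last w"
  shows "lc ph w = 0"
  using lc_good[OF assms(1,2)] exc_vanish[OF assms(2,3)] by simp

lemma bdelta_lc: "bdelta a th w = (if w = [] then 1 else if hd w = a \<and> last w = a then lc th w else 0)"
  by (simp add: bdelta_def lc_def)

lemma A1:
  assumes gd: "good ph ps" and ph0: "ph [] = 1"
  shows "bb_let a ph W = eps W + (\<Sum>j\<in>{1..length W}. bdelta a ph (take j W) * bb_let a ph (drop j W))"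
proof (cases "W = []")
  case True then show ?thesis by (simp add: bb_let_def eps_def)
next
  case False
  define n where "n = length W"
  have facts: "take j W \<noteq> [] \<and> hd (take j W) = hd W \<and> last (take j W) = W ! (j - 1)" if "j \<in> {1..n}" for j
    using that False by (auto simp: n_def hd_take last_conv_nth min_def)
  have facts2: "drop j W \<noteq> [] \<and> hd (drop j W) = W ! j \<and> last (drop j W) = last W" if "j < n" for j
    using that by (auto simp: n_def hd_drop_conv_nth last_drop)
  have bbn: "bb_let a ph [] = 1" by (simp add: bb_let_def)
  show ?thesis
  proof (cases "hd W = a \<and> last W = a")
    case True
    have trm: "bdelta a ph (take j W) * bb_let a ph (drop j W) = (if j \<in> PB W then 0 else lc ph (take j W) * bb ph (drop j W))"
      if j: "j \<in> {1..n}" for j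
    proof (cases "j < n")
      case jn: True
      note f1 = facts[OF j] and f2 = facts2[OF jn]
      have j1: "0 < j" using j by auto
      show ?thesis
      proof (cases "W ! (j - 1) = W ! j")
        case eq: True
        then have "j \<notin> PB W" by (simp add: PB_def)
        moreover have "bdelta a ph (take j W) * bb_let a ph (drop j W) = lc ph (take j W) * bb ph (drop j W)"
        proof (cases "W ! (j - 1) = a")
          case True then show ?thesis using f1 f2 eq \<open>hd W = a \<and> last W = a\<close> by (simp add: bdelta_lc bb_let_def)
        next
          case False
          then have "lc ph (take j W) = 0" using lc_van[OF gd] f1 True by auto
          then show ?thesis using f1 False by (simp add: bdelta_lc)
        qed
        ultimately show ?thesis by simp
      next
        case neq: False
        then have "j \<in> PB W" using j1 jn by (simp add: PB_def n_def)
        moreover have "bdelta a ph (take j W) * bb_let a ph (drop j W) = 0"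
          using f1 f2 neq by (auto simp: bdelta_lc bb_let_def)
        ultimately show ?thesis by simp
      qed
    next
      case False
      then have jn: "j = n" using j by auto
      then have "j \<notin> PB W" by (simp add: PB_def n_def)
      moreover have "take j W = W" "drop j W = []" using jn by (simp_all add: n_def)
      ultimately show ?thesis using True \<open>W \<noteq> []\<close> by (simp add: bdelta_lc bb_def bb_let_def)
    qed
    have "(\<Sum>j\<in>{1..n}. bdelta a ph (take j W) * bb_let a ph (drop j W))
        = (\<Sum>j\<in>{1..n}. if j \<in> PB W then 0 else lc ph (take j W) * bb ph (drop j W))"
      by (rule sum.cong) (simp_all add: trm)
    also have "\<dots> = (\<Sum>j\<in>{1..n} - PB W. lc ph (take j W) * bb ph (drop j W))"
    proof -
      have "(\<Sum>j\<in>{1..n}. if j \<in> PB W then 0 else lc ph (take j W) * bb ph (drop j W))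
          = (\<Sum>j\<in>{1..n}. if j \<in> - PB W then lc ph (take j W) * bb ph (drop j W) else 0)"
        by (rule sum.cong) auto
      also have "\<dots> = (\<Sum>j\<in>{1..n} \<inter> - PB W. lc ph (take j W) * bb ph (drop j W))"
        by (simp add: sum.inter_restrict)
      finally show ?thesis by (simp add: Diff_eq)
    qed
    also have "\<dots> = bb ph W" using G[where th=ph, OF ph0 False] by (simp add: n_def)
    finally show ?thesis using True False by (simp add: bb_let_def eps_def n_def)
  next
    case nb: False
    have z: "bdelta a ph (take j W) * bb_let a ph (drop j W) = 0" if j: "j \<in> {1..n}" for j
    proof (cases "hd W = a")
      case False then show ?thesis using facts[OF j] by (simp add: bdelta_lc)
    next
      case True
      with nb have lW: "last W \<noteq> a" by simp
      show ?thesis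
      proof (cases "j < n")
        case True then show ?thesis using facts2[OF True] lW by (simp add: bb_let_def)
      next
        case False
        then have "take j W = W" using j by (simp add: n_def)
        then show ?thesis using lW \<open>W \<noteq> []\<close> by (simp add: bdelta_lc)
      qed
    qed
    have s0: "(\<Sum>j\<in>{1..length W}. bdelta a ph (take j W) * bb_let a ph (drop j W)) = 0"
      unfolding n_def[symmetric] by (rule sum.neutral) (use z in blast)
    have l0: "bb_let a ph W = 0" unfolding bb_let_def if_not_P[OF False] if_not_P[OF nb] ..
    have e0: "eps W = 0" using False by (simp add: eps_def)
    show ?thesis unfolding s0 l0 e0 by simp
  qed
qed

lemma shift_image: "j \<le> n \<Longrightarrow> (\<lambda>i. i + j) ` {..<n - j} = {j..<(n::nat)}"
proof (rule set_eqI)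
  fix k assume "j \<le> n"
  show "k \<in> (\<lambda>i. i + j) ` {..<n - j} \<longleftrightarrow> k \<in> {j..<n}"
  proof
    assume "k \<in> {j..<n}" then show "k \<in> (\<lambda>i. i + j) ` {..<n - j}"
      by (intro image_eqI[where x="k - j"]) auto
  qed (use \<open>j \<le> n\<close> in auto)
qed

lemma conv_swap:
  fixes F D :: "word \<Rightarrow> complex"
  assumes A: "\<And>W. F W = eps W + (\<Sum>j\<in>{1..length W}. D (take j W) * F (drop j W))"
  shows "F W = eps W + (\<Sum>i\<in>{..<length W}. F (take i W) * D (drop i W))"
proof (induction "length W" arbitrary: W rule: less_induct)
  case less
  have F0: "F [] = 1" using A[of "[]"] by (simp add: eps_def)
  show ?case
  proof (cases "W = []")
    case True then show ?thesis using F0 by (simp add: eps_def)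
  next
    case False
    define n where "n = length W"
    have n1: "1 \<le> n" using False by (cases W) (auto simp: n_def)
    have e1: "{1..n} = insert n {1..<n}" using n1 by auto
    have s1: "(\<Sum>j\<in>{1..n}. D (take j W) * F (drop j W)) = D (take n W) * F (drop n W) + (\<Sum>j\<in>{1..<n}. D (take j W) * F (drop j W))"
      using n1 by (subst e1) (auto simp: sum.insert)
    have e2: "{..<n} = insert 0 {1..<n}" using n1 by auto
    have epsW: "eps W = 0" using False by (simp add: eps_def)
    let ?G = "\<lambda>j k. D (take j W) * F (take (k - j) (drop j W)) * D (drop k W)"
    have "F W = D W + (\<Sum>j\<in>{1..<n}. D (take j W) * F (drop j W))"
      using A[of W] epsW F0 s1 by (simp add: n_def)
    also have "(\<Sum>j\<in>{1..<n}. D (take j W) * F (drop j W)) = (\<Sum>j\<in>{1..<n}. \<Sum>k\<in>{k\<in>{1..<n}. j \<le> k}. ?G j k)"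
    proof (rule sum.cong[OF refl])
      fix j assume j: "j \<in> {1..<n}"
      have ne: "drop j W \<noteq> []" using j by (simp add: n_def)
      have lt: "length (drop j W) < length W" using j n1 by (auto simp: n_def)
      have "F (drop j W) = eps (drop j W) + (\<Sum>i\<in>{..<length (drop j W)}. F (take i (drop j W)) * D (drop i (drop j W)))"
        by (rule less.hyps[OF lt])
      then have "F (drop j W) = (\<Sum>i\<in>{..<n - j}. F (take i (drop j W)) * D (drop i (drop j W)))"
        using ne by (simp add: n_def eps_def)
      also have "\<dots> = (\<Sum>k\<in>{j..<n}. F (take (k - j) (drop j W)) * D (drop k W))"
        using j by (subst shift_image[symmetric, of j n]) (auto simp: sum.reindex inj_on_def add.commute)
      also have "{j..<n} = {k\<in>{1..<n}. j \<le> k}" using j by auto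
      finally show "D (take j W) * F (drop j W) = (\<Sum>k\<in>{k\<in>{1..<n}. j \<le> k}. ?G j k)"
        by (simp add: sum_distrib_left mult.assoc)
    qed
    also have "\<dots> = (\<Sum>k\<in>{1..<n}. \<Sum>j\<in>{j\<in>{1..<n}. j \<le> k}. ?G j k)"
      by (rule sum.swap_restrict) auto
    also have "\<dots> = (\<Sum>k\<in>{1..<n}. F (take k W) * D (drop k W))"
    proof (rule sum.cong[OF refl])
      fix k assume k: "k \<in> {1..<n}"
      have ne: "take k W \<noteq> []" using k by (auto simp: n_def)
      have "F (take k W) = (\<Sum>j\<in>{1..k}. D (take j (take k W)) * F (drop j (take k W)))"
        using A[of "take k W"] ne k by (simp add: eps_def n_def min_def)
      also have "\<dots> = (\<Sum>j\<in>{1..k}. D (take j W) * F (take (k - j) (drop j W)))"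
        by (rule sum.cong) (auto simp: drop_take min_def)
      also have "{1..k} = {j\<in>{1..<n}. j \<le> k}" using k by auto
      finally show "(\<Sum>j\<in>{j\<in>{1..<n}. j \<le> k}. ?G j k) = F (take k W) * D (drop k W)"
        by (simp add: sum_distrib_right)
    qed
    finally show ?thesis using epsW F0 by (simp add: n_def[symmetric] e2)
  qed
qed

lemma A2:
  assumes gd: "good ph ps" and ph0: "ph [] = 1"
  shows "bb_let a ph W = eps W + (\<Sum>i\<in>{..<length W}. bb_let a ph (take i W) * bdelta a ph (drop i W))"
  by (rule conv_swap) (rule A1[OF gd ph0])

lemma sum_list_comp:
  fixes G :: "word \<Rightarrow> word \<Rightarrow> complex"
  shows "(\<Sum>(u, v)\<leftarrow>concat (map (\<lambda>i. if P i then [(h1 i, h2 i)] else []) [0..<n]). G u v)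
     = (\<Sum>i<n. if P i then G (h1 i) (h2 i) else 0)"
  by (induction n) (auto simp: split_beta)

lemma tens2_left:
  "tens2 (bdelta a ph) g (delta_left a W) = (\<Sum>j\<in>{1..length W}. bdelta a ph (take j W) * g (drop j W))"
proof -
  have "tens2 (bdelta a ph) g (delta_left a W) = (\<Sum>i<length W. if W ! i = a then bdelta a ph (take (Suc i) W) * g (drop (Suc i) W) else 0)"
    by (simp add: tens2_def delta_left_def sum_list_comp)
  also have "\<dots> = (\<Sum>i<length W. bdelta a ph (take (Suc i) W) * g (drop (Suc i) W))"
  proof (rule sum.cong[OF refl])
    fix i assume i: "i \<in> {..<length W}"
    have "take (Suc i) W \<noteq> []" using i by auto
    moreover have "last (take (Suc i) W) = W ! i"
      using i by (simp add: take_Suc_conv_app_nth)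
    ultimately show "(if W ! i = a then bdelta a ph (take (Suc i) W) * g (drop (Suc i) W) else 0) = bdelta a ph (take (Suc i) W) * g (drop (Suc i) W)"
      by (simp add: bdelta_lc)
  qed
  also have "\<dots> = (\<Sum>j\<in>{1..length W}. bdelta a ph (take j W) * g (drop j W))"
  proof -
    have "{1..length W} = Suc ` {..<length W}"
    proof (rule set_eqI)
      fix x show "x \<in> {1..length W} \<longleftrightarrow> x \<in> Suc ` {..<length W}" by (cases x) auto
    qed
    then show ?thesis by (simp add: sum.reindex)
  qed
  finally show ?thesis .
qed

lemma tens2_right:
  "tens2 g (bdelta a ph) (delta_right a W) = (\<Sum>i\<in>{..<length W}. g (take i W) * bdelta a ph (drop i W))"
proof -
  have "tens2 g (bdelta a ph) (delta_right a W) = (\<Sum>i<length W. if W ! i = a then g (take i W) * bdelta a ph (drop i W) else 0)"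
    by (simp add: tens2_def delta_right_def sum_list_comp)
  also have "\<dots> = (\<Sum>i<length W. g (take i W) * bdelta a ph (drop i W))"
  proof (rule sum.cong[OF refl])
    fix i assume i: "i \<in> {..<length W}"
    have "drop i W \<noteq> []" "hd (drop i W) = W ! i"
      using i by (auto simp: hd_drop_conv_nth)
    then show "(if W ! i = a then g (take i W) * bdelta a ph (drop i W) else 0) = g (take i W) * bdelta a ph (drop i W)"
      by (simp add: bdelta_lc)
  qed
  finally show ?thesis .
qed


section \<open>Decomposition of the X-bottomed walk\<close>

definition tt :: "(word \<Rightarrow> complex) \<Rightarrow> (nat \<Rightarrow> complex) \<Rightarrow> word \<Rightarrow> complex" where
  "tt u v V = (if V \<noteq> [] \<and> last V = X then u (concat (butlast (blocks V))) * v (length (last (blocks V))) else 0)"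

definition trr :: "(word \<Rightarrow> complex) \<Rightarrow> trans" where
  "trr ps a T = (if T = [] \<and> a = X then [] else step ps ps a T)"

definition TX :: "(word \<Rightarrow> complex) \<Rightarrow> (nat \<Rightarrow> complex) \<Rightarrow> nat \<Rightarrow> complex" where
  "TX ph v m = v (Suc m) - ph (replicate m X) * v 1"

lemma last_concat_valid: "valid bs \<Longrightarrow> bs \<noteq> [] \<Longrightarrow> last (concat bs) = hd (last bs)"
proof -
  assume v: "valid bs" and ne: "bs \<noteq> []"
  have bs: "bs = butlast bs @ [last bs]" using ne by simp
  have l: "last bs \<noteq> [] \<and> set (last bs) \<subseteq> {hd (last bs)}" using v ne by (auto simp: valid_def)
  have "concat bs = concat (butlast bs) @ last bs" by (subst bs) simp
  then have "last (concat bs) = last (last bs)" using l by simp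
  then show ?thesis using l const_last by auto
qed

lemma hd_last_blocks: "T \<noteq> [] \<Longrightarrow> hd (last (blocks T)) = last T"
  using last_concat_valid[OF valid_blocks, of T] by simp

lemma blocks_snoc_block:
  assumes "T = [] \<or> last T \<noteq> x" "M \<noteq> []" "set M \<subseteq> {x}"
  shows "blocks (T @ M) = blocks T @ [M]"
proof -
  have hM: "hd M = x" using assms(2,3) by (cases M) auto
  have "valid (blocks T @ [M])"
    unfolding valid_append using valid_blocks[of T] assms hM hd_last_blocks[of T]
    by (auto simp: valid_def)
  then have "blocks (concat (blocks T @ [M])) = blocks T @ [M]" by (rule blocks_concat)
  then show ?thesis by simp
qed

lemma tt_app:
  assumes "T = [] \<or> last T \<noteq> X" "0 < m"
  shows "tt u v (T @ replicate m X) = u T * v m"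
proof -
  have b: "blocks (T @ replicate m X) = blocks T @ [replicate m X]"
    by (rule blocks_snoc_block[OF assms(1)]) (use assms(2) in auto)
  show ?thesis using assms(2) by (simp add: tt_def b)
qed

lemma decomp_X:
  assumes "V \<noteq> []" "last V = X"
  obtains T m where "V = T @ replicate m X" "T = [] \<or> last T \<noteq> X" "0 < m"
proof -
  define bs where "bs = blocks V"
  have v: "valid bs" and ne: "bs \<noteq> []" using assms valid_blocks by (auto simp: bs_def)
  define M where "M = last bs"
  define T where "T = concat (butlast bs)"
  have bsd: "bs = butlast bs @ [M]" using ne by (simp add: M_def)
  have V: "V = T @ M" by (subst concat_blocks[symmetric, of V]) (subst bsd[unfolded bs_def], simp add: T_def bs_def)
  have M: "M \<noteq> []" "set M \<subseteq> {hd M}" using v ne by (auto simp: valid_def M_def)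
  have hM: "hd M = X" using M const_last assms V by (metis last_appendR)
  have rep: "M = replicate (length M) X" using M hM const_rep by metis
  have T: "T = [] \<or> last T \<noteq> X"
  proof (cases "butlast bs = []")
    case True then show ?thesis by (simp add: T_def)
  next
    case False
    have vb: "valid (butlast bs)" using valid_butlast[OF v] .
    have "valid (butlast bs @ [M])" using v bsd by simp
    then have "hd (last (butlast bs)) \<noteq> hd M" using False by (simp add: valid_append)
    moreover have "last T = hd (last (butlast bs))" using last_concat_valid[OF vb False] by (simp add: T_def)
    ultimately show ?thesis using hM by simp
  qed
  show ?thesis using that[of T "length M"] V rep T M by (metis length_greater_0_conv)
qed

lemma step_app:
  assumes T: "T \<noteq> []" "last T \<noteq> x" and M: "M \<noteq> []" "set M \<subseteq> {x}"
  shows "step ph ps a (T @ M) = map (\<lambda>(T', c). (T' @ M, c)) (step ps ps a T)"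
proof -
  have b: "blocks (T @ M) = blocks T @ [M]" using blocks_snoc_block[of T x M] T M by auto
  obtain U bsT where bT: "blocks T = U # bsT" using T by (cases "blocks T") auto
  have Tc: "T = U @ concat bsT" using concat_blocks[of T] bT by simp
  show ?thesis
  proof (cases "bsT = []")
    case True
    then show ?thesis using b bT Tc by (simp add: step_def)
  next
    case False
    then show ?thesis using b bT Tc by (simp add: step_def)
  qed
qed

lemma sum_list_map_app:
  fixes g :: "word \<Rightarrow> complex"
  shows "(\<Sum>(V', c)\<leftarrow>map (\<lambda>(T', c). (T' @ M, c)) L. c * g V') = (\<Sum>(T', c)\<leftarrow>L. c * g (T' @ M))"
  by (induction L) auto

lemma filter_map_app:
  "M \<noteq> [] \<Longrightarrow> filter (\<lambda>(V', c). V' \<noteq> []) (map (\<lambda>(T', c). (T' @ M, c)) L) = map (\<lambda>(T', c). (T' @ M, c)) L"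
  by (induction L) auto

lemma sum_list_cong':
  fixes g1 g2 :: "word \<Rightarrow> complex"
  shows "(\<And>V' c. (V', c) \<in> set L \<Longrightarrow> g1 V' = g2 V') \<Longrightarrow> (\<Sum>(V', c)\<leftarrow>L. c * g1 V') = (\<Sum>(V', c)\<leftarrow>L. c * g2 V')"
  by (induction L) (simp, fastforce)

lemma tf_trr: "T \<noteq> [] \<Longrightarrow> tf (trr ps) a u T = tf (step ps ps) a u T"
  by (simp add: tf_def trr_def)

lemma tf_trr_X: "tf (trr ps) X u [] = 0"
  by (simp add: tf_def trr_def)

lemma sum_list_mult_const:
  fixes u :: "word \<Rightarrow> complex"
  shows "(\<Sum>(T', c)\<leftarrow>L. c * (u T' * z)) = (\<Sum>(T', c)\<leftarrow>L. c * u T') * z"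
  by (induction L) (auto simp: algebra_simps)

lemma TT:
  "tf (qtr (step ph ps)) a (tt u v) V
   = tt (tf (trr ps) a u) v V + (if a = X then u [] else 0) * (tt eps (TX ph v) V + v 1 * eps V)"
proof (cases "V = []")
  case True
  have "blocks [X] = [[X]]" by simp
  then show ?thesis using True
    by (cases a) (simp_all add: tf_def qtr_def step_def tt_def eps_def)
next
  case ne: False
  show ?thesis
  proof (cases "last V = X")
    case False
    have "tf (qtr (step ph ps)) a (tt u v) V = 0"
      unfolding tf_def qtr_def
      by (rule sum_list_vanish) (use step_last[OF ne] False in \<open>auto simp: tt_def\<close>)
    then show ?thesis using ne False by (simp add: tt_def eps_def)
  next
    case True
    obtain T m where V: "V = T @ replicate m X" and T: "T = [] \<or> last T \<noteq> X" and m: "0 < m"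
      using decomp_X[OF ne True] by blast
    let ?M = "replicate m X"
    have M: "?M \<noteq> []" "set ?M \<subseteq> {X}" using m by auto
    have ttV: "tt w z V = w T * z m" for w z using tt_app[OF T m] V by simp
    show ?thesis
    proof (cases "T = []")
      case Tnil: True
      have bM: "blocks ?M = [?M]" using blocks_snoc_block[of "[]" X ?M] M by simp
      have hM: "hd ?M = X" using m by (cases m) auto
      have r1: "tt u v (X # ?M) = u [] * v (Suc m)"
        using tt_app[of "[]" "Suc m" u v] by simp
      have r2: "tt u v [X] = u [] * v 1"
        using tt_app[of "[]" "1" u v] by simp
      have r3: "tt u v (Y # ?M) = u [Y] * v m"
        using tt_app[of "[Y]" m u v] m by simp
      have r4: "tt w z ?M = w [] * z m" for w z using tt_app[of "[]" m w z] m by simp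
      show ?thesis
      proof (cases a)
        case X
        show ?thesis using Tnil V bM hM r1 r2 r4 m
          by (simp add: X tf_def qtr_def step_def ttV TX_def trr_def eps_def algebra_simps)
      next
        case Y
        show ?thesis using Tnil V bM hM r3 r4 m
          by (simp add: Y tf_def qtr_def step_def ttV trr_def eps_def algebra_simps)
      qed
    next
      case Tne: False
      with T have lT: "last T \<noteq> X" by simp
      have st: "step ph ps a V = map (\<lambda>(T', c). (T' @ ?M, c)) (step ps ps a T)"
        unfolding V by (rule step_app[OF Tne lT M])
      have "tf (qtr (step ph ps)) a (tt u v) V = (\<Sum>(T', c)\<leftarrow>step ps ps a T. c * tt u v (T' @ ?M))"
        unfolding tf_def qtr_def st filter_map_app[OF M(1)] sum_list_map_app ..
      also have "\<dots> = (\<Sum>(T', c)\<leftarrow>step ps ps a T. c * (u T' * v m))"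
      proof (rule sum_list_cong')
        fix T' c assume "(T', c) \<in> set (step ps ps a T)"
        then have "T' = [] \<or> last T' \<noteq> X" using step_last[OF Tne] lT by fastforce
        then show "tt u v (T' @ ?M) = u T' * v m" by (rule tt_app[OF _ m])
      qed
      also have "\<dots> = tf (step ps ps) a u T * v m"
        unfolding tf_def by (rule sum_list_mult_const)
      finally show ?thesis using Tne ne by (simp add: ttV tf_trr eps_def)
    qed
  qed
qed


lemma partial_Suc_Cons:
  "partial a (Suc k) (b # W) = (if b = a then map (Cons []) (partial a k W) else [])
      @ map (\<lambda>r. (b # hd r) # tl r) (partial a (Suc k) W)"
proof -
  have u: "[0..<Suc (length W)] = 0 # map Suc [0..<length W]"
    by (subst upt_conv_Cons) (simp_all add: map_Suc_upt)
  show ?thesis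
    apply (simp only: partial.simps(2)[of a k "b # W"] length_Cons u list.map)
    apply (simp add: map_concat comp_def if_distrib[of "map _"] cong: if_cong)
    done
qed

lemma partial_len: "r \<in> set (partial a k W) \<Longrightarrow> length r = Suc k"
  by (induction k arbitrary: W r) auto

lemma partial_big: "length W < k \<Longrightarrow> partial a k W = []"
proof (induction k arbitrary: W)
  case 0 then show ?case by simp
next
  case (Suc k)
  have "partial a k (drop (Suc i) W) = []" if "i < length W" for i
    using Suc.IH[of "drop (Suc i) W"] Suc.prems that by simp
  then show ?case by (auto simp: concat_eq_Nil_conv)
qed

declare partial.simps(2)[simp del]

lemma partial_Suc_nil [simp]: "partial a (Suc k) [] = []"
  by (simp add: partial.simps(2))

lemma tens_append: "tens fs (L1 @ L2) = tens fs L1 + tens fs L2"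
  by (simp add: tens_def)

lemma tens_Cons_nil: "tens (f # fs) (map (Cons []) L) = f [] * tens fs L"
  by (induction L) (auto simp: tens_def algebra_simps)

lemma tens_Cons_ext:
  "(\<And>r. r \<in> set L \<Longrightarrow> r \<noteq> []) \<Longrightarrow>
   tens (f # fs) (map (\<lambda>r. (b # hd r) # tl r) L) = tens ((\<lambda>w. f (b # w)) # fs) L"
proof (induction L)
  case Nil then show ?case by (simp add: tens_def)
next
  case (Cons r L)
  then obtain r0 rs where r: "r = r0 # rs" by (cases r) auto
  have "tens (f # fs) (map (\<lambda>r. (b # hd r) # tl r) L) = tens ((\<lambda>w. f (b # w)) # fs) L"
    using Cons by auto
  then show ?case using r by (simp add: tens_def)
qed

lemma tens_single: "tens [f] [[W]] = f W" by (simp add: tens_def)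

lemma tens_nil [simp]: "tens fs [] = 0" by (simp add: tens_def)

definition Om :: "(word \<Rightarrow> complex) \<Rightarrow> (word \<Rightarrow> complex) \<Rightarrow> (word \<Rightarrow> complex) \<Rightarrow> (nat \<Rightarrow> complex) \<Rightarrow> word \<Rightarrow> complex" where
  "Om ph ps u v P = wk (qtr (step ph ps)) P (tt u v) []"

definition Bp :: "(word \<Rightarrow> complex) \<Rightarrow> word \<Rightarrow> complex" where
  "Bp ps w = wk (trr ps) w eps []"

fun bk :: "(word \<Rightarrow> complex) \<Rightarrow> nat \<Rightarrow> (nat \<Rightarrow> complex) \<Rightarrow> complex" where
  "bk ph 0 v = v 1"
| "bk ph (Suc k) v = bk ph k (TX ph v)"

definition Rh :: "(word \<Rightarrow> complex) \<Rightarrow> (word \<Rightarrow> complex) \<Rightarrow> (word \<Rightarrow> complex) \<Rightarrow> (nat \<Rightarrow> complex) \<Rightarrow> word \<Rightarrow> complex" where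
  "Rh ph ps u v P = (\<Sum>k\<le>length P. bk ph k v * tens ((\<lambda>w. wk (trr ps) w u []) # replicate k (Bp ps) @ [eps]) (partial X (Suc k) P))"

lemma Rh_ext:
  assumes "length P \<le> N"
  shows "Rh ph ps u v P = (\<Sum>k\<le>N. bk ph k v * tens ((\<lambda>w. wk (trr ps) w u []) # replicate k (Bp ps) @ [eps]) (partial X (Suc k) P))"
  unfolding Rh_def
  by (rule sum.mono_neutral_left) (use assms in \<open>auto simp: partial_big\<close>)

lemma wkq_eps: "wk (qtr tr) P eps [] = eps P"
proof (cases P)
  case Nil then show ?thesis by simp
next
  case (Cons a P')
  have "tf (qtr tr) a eps = (\<lambda>V. 0)"
    unfolding tf_def qtr_def by (rule ext, rule sum_list_vanish) (auto simp: eps_def)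
  then show ?thesis using Cons by (simp add: wk_zero eps_def)
qed

lemma Om_Cons:
  "Om ph ps u v (a # P) = Om ph ps (tf (trr ps) a u) v P
     + (if a = X then u [] else 0) * (Om ph ps eps (TX ph v) P + v 1 * eps P)"
proof -
  have "tf (qtr (step ph ps)) a (tt u v)
      = (\<lambda>V. tt (tf (trr ps) a u) v V + (if a = X then u [] else 0) * (\<lambda>V. tt eps (TX ph v) V + v 1 * eps V) V)"
    by (rule ext) (simp add: TT)
  then have "Om ph ps u v (a # P) = wk (qtr (step ph ps)) P (tt (tf (trr ps) a u) v) []
     + (if a = X then u [] else 0) * wk (qtr (step ph ps)) P (\<lambda>V. tt eps (TX ph v) V + v 1 * eps V) []"
    by (simp add: Om_def wk_lin)
  also have "wk (qtr (step ph ps)) P (\<lambda>V. tt eps (TX ph v) V + v 1 * eps V) [] = Om ph ps eps (TX ph v) P + v 1 * eps P"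
    by (simp add: wk_lin Om_def wkq_eps)
  finally show ?thesis by (simp add: Om_def)
qed

lemma Bp_eta: "(\<lambda>w. wk (trr ps) w eps []) = Bp ps" by (rule ext) (simp add: Bp_def)

lemma Om_Rh: "Om ph ps u v P = Rh ph ps u v P"
proof (induction P arbitrary: u v)
  case Nil
  have "partial X (Suc 0) [] = []" by simp
  then show ?case by (simp add: Om_def Rh_def tt_def)
next
  case (Cons b P)
  let ?f0 = "\<lambda>w. wk (trr ps) w u []"
  let ?f0' = "\<lambda>w. wk (trr ps) w (tf (trr ps) b u) []"
  let ?rest = "\<lambda>k. replicate k (Bp ps) @ [eps]"
  have ne: "\<And>k r. r \<in> set (partial X (Suc k) P) \<Longrightarrow> r \<noteq> []" using partial_len by fastforce
  have f0': "(\<lambda>w. ?f0 (b # w)) = ?f0'" by simp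
  have split: "tens (?f0 # ?rest k) (partial X (Suc k) (b # P))
      = (if b = X then u [] * tens (?rest k) (partial X k P) else 0) + tens (?f0' # ?rest k) (partial X (Suc k) P)" for k
    by (simp add: partial_Suc_Cons tens_append tens_Cons_nil tens_Cons_ext[OF ne] f0')
  have "Rh ph ps u v (b # P) = (\<Sum>k\<le>Suc (length P). bk ph k v * ((if b = X then u [] * tens (?rest k) (partial X k P) else 0)
        + tens (?f0' # ?rest k) (partial X (Suc k) P)))"
    by (simp add: Rh_def split)
  also have "\<dots> = (\<Sum>k\<le>Suc (length P). bk ph k v * (if b = X then u [] * tens (?rest k) (partial X k P) else 0))
        + Rh ph ps (tf (trr ps) b u) v P"
    by (simp add: sum.distrib distrib_left Rh_ext[of P "Suc (length P)"])
  also have "(\<Sum>k\<le>Suc (length P). bk ph k v * (if b = X then u [] * tens (?rest k) (partial X k P) else 0))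
      = (if b = X then u [] else 0) * (Rh ph ps eps (TX ph v) P + v 1 * eps P)"
  proof (cases "b = X")
    case True
    have "(\<Sum>k\<le>Suc (length P). bk ph k v * (u [] * tens (?rest k) (partial X k P)))
        = bk ph 0 v * (u [] * tens (?rest 0) (partial X 0 P)) + (\<Sum>k\<le>length P. bk ph (Suc k) v * (u [] * tens (?rest (Suc k)) (partial X (Suc k) P)))"
      by (rule sum.atMost_Suc_shift)
    also have "\<dots> = u [] * (v 1 * eps P + Rh ph ps eps (TX ph v) P)"
      by (simp add: tens_single Rh_def Bp_eta sum_distrib_left algebra_simps)
    finally show ?thesis using True by (simp add: algebra_simps)
  qed simp
  finally show ?case using Cons.IH by (simp add: Om_Cons algebra_simps)
qed


lemma exc_X:
  "exc (step ph ps) (X # P) = Om ph ps eps (\<lambda>m. ph (replicate (Suc m) X) - ph (replicate m X) * ph [X]) P + ph [X] * eps P"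
proof -
  let ?v0 = "\<lambda>m. ph (replicate (Suc m) X) - ph (replicate m X) * ph [X]"
  have h: "tf (step ph ps) X eps V = tt eps ?v0 V + ph [X] * eps V" for V
  proof (cases "V = []")
    case True then show ?thesis by (simp add: tf_def step_def tt_def eps_def)
  next
    case ne: False
    show ?thesis
    proof (cases "last V = X")
      case False
      have "tf (step ph ps) X eps V = 0"
        unfolding tf_def by (rule sum_list_vanish) (use step_nil_target[OF ne] False in \<open>force simp: eps_def\<close>)
      then show ?thesis using ne False by (simp add: tt_def eps_def)
    next
      case True
      obtain T m where V: "V = T @ replicate m X" and T: "T = [] \<or> last T \<noteq> X" and m: "0 < m"
        using decomp_X[OF ne True] by blast
      let ?M = "replicate m X"
      have M: "?M \<noteq> []" "set ?M \<subseteq> {X}" using m by auto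
      have ttV: "tt w z V = w T * z m" for w z using tt_app[OF T m] V by simp
      show ?thesis
      proof (cases "T = []")
        case True
        have bM: "blocks ?M = [?M]" using blocks_snoc_block[of "[]" X ?M] M by simp
        have hM: "hd ?M = X" using m by (cases m) auto
        have ttM: "tt w z ?M = w [] * z m" for w z using tt_app[of "[]" m w z] m by simp
        have "X # ?M = replicate (Suc m) X" by simp
        then show ?thesis using True V bM hM m ne
          by (simp add: tf_def step_def ttM eps_def del: replicate_Suc)
      next
        case Tne: False
        with T have lT: "last T \<noteq> X" by simp
        have st: "step ph ps X V = map (\<lambda>(T', c). (T' @ ?M, c)) (step ps ps X T)"
          unfolding V by (rule step_app[OF Tne lT M])
        have "tf (step ph ps) X eps V = 0"
          unfolding tf_def st sum_list_map_app by (rule sum_list_vanish) (use M in \<open>simp add: eps_def\<close>)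
        then show ?thesis using Tne ne by (simp add: ttV eps_def)
      qed
    qed
  qed
  have "exc (step ph ps) (X # P) = wk (qtr (step ph ps)) P (\<lambda>V. tt eps ?v0 V + ph [X] * eps V) []"
    by (simp add: exc_def h[abs_def])
  also have "\<dots> = Om ph ps eps ?v0 P + ph [X] * eps P"
    by (simp add: wk_lin Om_def wkq_eps)
  finally show ?thesis .
qed

lemma Bp_nil [simp]: "Bp ps [] = 1" by (simp add: Bp_def eps_def)

lemma Bp_lastX: "w \<noteq> [] \<Longrightarrow> last w = X \<Longrightarrow> Bp ps w = 0"
proof -
  assume "w \<noteq> []" "last w = X"
  then obtain w' where "w = w' @ [X]" by (metis append_butlast_last_id)
  then show "Bp ps w = 0" by (simp add: Bp_def wk_snoc tf_def trr_def)
qed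

lemma tens_Xwords:
  assumes "\<And>f w. f \<in> set fs \<Longrightarrow> w \<noteq> [] \<Longrightarrow> last w = X \<Longrightarrow> f w = 0" and "length fs = Suc j"
  shows "tens fs (partial X j (replicate n X)) = (if j = n then (\<Prod>f\<leftarrow>fs. f []) else 0)"
  using assms
proof (induction n arbitrary: j fs)
  case 0
  then show ?case
  proof (cases j)
    case 0 with "0.prems" obtain f where "fs = [f]" by (cases fs) auto
    then show ?thesis using 0 by (simp add: tens_single)
  qed simp
next
  case (Suc n)
  show ?case
  proof (cases j)
    case 0
    with Suc.prems obtain f where fs: "fs = [f]" by (cases fs) auto
    have "f (replicate (Suc n) X) = 0" using Suc.prems(1)[of f "replicate (Suc n) X"] fs by (simp add: last_replicate)
    then show ?thesis using 0 fs by (simp add: tens_single)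
  next
    case (Suc j')
    with Suc.prems obtain f fs' where fs: "fs = f # fs'" and l: "length fs' = Suc j'" by (cases fs) auto
    have ne: "\<And>r. r \<in> set (partial X (Suc j') (replicate n X)) \<Longrightarrow> r \<noteq> []" using partial_len by fastforce
    have A: "tens fs' (partial X j' (replicate n X)) = (if j' = n then (\<Prod>f\<leftarrow>fs'. f []) else 0)"
      by (rule Suc.IH) (use Suc.prems fs l in auto)
    have B: "tens ((\<lambda>w. f (X # w)) # fs') (partial X (Suc j') (replicate n X)) = (if Suc j' = n then f [X] * (\<Prod>f\<leftarrow>fs'. f []) else 0)"
    proof -
      have "tens ((\<lambda>w. f (X # w)) # fs') (partial X (Suc j') (replicate n X))
          = (if Suc j' = n then (\<Prod>g\<leftarrow>(\<lambda>w. f (X # w)) # fs'. g []) else 0)"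
      proof (rule Suc.IH)
        fix g w assume g: "g \<in> set ((\<lambda>w. f (X # w)) # fs')" and w: "w \<noteq> []" "last w = X"
        then show "g w = 0"
        proof (cases "g \<in> set fs'")
          case False
          then have "g = (\<lambda>w. f (X # w))" using g by auto
          then show ?thesis using Suc.prems(1)[of f "X # w"] fs w by simp
        qed (use Suc.prems fs in auto)
      qed (use l in simp)
      then show ?thesis by simp
    qed
    have fX: "f [X] = 0" using Suc.prems(1)[of f "[X]"] fs by simp
    show ?thesis
      using A B fX Suc fs
      by (simp add: partial_Suc_Cons tens_append tens_Cons_nil tens_Cons_ext[OF ne])
  qed
qed


lemma prod_ones: "(\<Prod>f\<leftarrow>replicate j (Bp ps) @ [eps]. f []) = 1"
  by (induction j) (auto simp: eps_def)

lemma gamma: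
  assumes gd: "good ph ps"
  shows "lc ph (replicate (Suc (Suc k)) X) = bk ph k (\<lambda>m. ph (replicate (Suc m) X) - ph (replicate m X) * ph [X])"
proof -
  let ?v0 = "\<lambda>m. ph (replicate (Suc m) X) - ph (replicate m X) * ph [X]"
  let ?P = "replicate (Suc k) X"
  have "lc ph (X # ?P) = exc (step ph ps) (X # ?P)" by (rule lc_good[OF gd]) simp
  also have "\<dots> = Rh ph ps eps ?v0 ?P" by (simp add: exc_X Om_Rh eps_def)
  also have "\<dots> = (\<Sum>j\<le>Suc k. bk ph j ?v0 * (if j = k then 1 else 0))"
    unfolding Rh_def Bp_eta length_replicate
  proof (rule sum.cong[OF refl])
    fix j assume "j \<in> {..Suc k}"
    have "tens (Bp ps # replicate j (Bp ps) @ [eps]) (partial X (Suc j) ?P)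
        = (if Suc j = Suc k then (\<Prod>f\<leftarrow>Bp ps # replicate j (Bp ps) @ [eps]. f []) else 0)"
      by (rule tens_Xwords) (auto simp: Bp_lastX eps_def)
    then show "bk ph j ?v0 * tens (Bp ps # replicate j (Bp ps) @ [eps]) (partial X (Suc j) ?P) = bk ph j ?v0 * (if j = k then 1 else 0)"
      using prod_ones[of j ps] by simp
  qed
  also have "\<dots> = (\<Sum>j\<le>Suc k. if j = k then bk ph j ?v0 else 0)" by (rule sum.cong) auto
  also have "\<dots> = bk ph k ?v0" by (subst sum.delta) auto
  finally show ?thesis by simp
qed

lemma lc_single: "lc th [a] = th [a]"
  using lc_rec[of "[a]" th] by simp

lemma lc_X_formula:
  assumes gd: "good ph ps"
  shows "lc ph (X # P) = ph [X] * eps P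
     + (\<Sum>k\<le>length P. lc ph (replicate (Suc (Suc k)) X) * tens (Bp ps # replicate k (Bp ps) @ [eps]) (partial X (Suc k) P))"
proof -
  have "lc ph (X # P) = exc (step ph ps) (X # P)" by (rule lc_good[OF gd]) simp
  also have "\<dots> = ph [X] * eps P + Rh ph ps eps (\<lambda>m. ph (replicate (Suc m) X) - ph (replicate m X) * ph [X]) P"
    by (simp add: exc_X Om_Rh)
  finally show ?thesis by (simp add: Rh_def Bp_eta gamma[OF gd] del: replicate_Suc)
qed

lemma wk_cong:
  assumes "\<And>a V. V \<noteq> [] \<Longrightarrow> tr1 a V = tr2 a V"
  shows "(\<And>V. V \<noteq> [] \<Longrightarrow> g1 V = g2 V) \<Longrightarrow> V0 \<noteq> [] \<Longrightarrow> wk (qtr tr1) P g1 V0 = wk (qtr tr2) P g2 V0"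
proof (induction P arbitrary: g1 g2)
  case Nil then show ?case by simp
next
  case (Cons a P)
  have "tf (qtr tr1) a g1 V = tf (qtr tr2) a g2 V" if "V \<noteq> []" for V
  proof -
    have "qtr tr1 a V = qtr tr2 a V" using assms that by (simp add: qtr_def)
    then show ?thesis unfolding tf_def
      by (rule ssubst, intro sum_list_cong') (use Cons.prems in \<open>auto simp: qtr_def\<close>)
  qed
  then show ?case using Cons by simp
qed

lemma exc_trr:
  assumes "P \<noteq> []"
  shows "exc (trr ps) P = (if last P = Y then exc (step ps ps) P else 0)"
proof -
  obtain a P' where P: "P = a # P'" using assms by (cases P) auto
  show ?thesis
  proof (cases "P' = []")
    case True
    then show ?thesis using P by (cases a) (simp_all add: exc_def tf_def trr_def)
  next
    case False
    then obtain P'' b where P': "P' = P'' @ [b]" by (cases P' rule: rev_cases) auto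
    show ?thesis
    proof (cases b)
      case X
      have "qtr (trr ps) X [] = []" by (simp add: qtr_def trr_def)
      then show ?thesis using P P' X by (simp add: exc_def wk_snoc tf_def)
    next
      case Y
      have q1: "qtr (trr ps) Y [] = [([Y], 1)]" by (simp add: qtr_def trr_def step_def)
      have q2: "qtr (step ps ps) Y [] = [([Y], 1)]" by (simp add: qtr_def step_def)
      have "wk (qtr (trr ps)) P'' (tf (trr ps) a eps) [Y] = wk (qtr (step ps ps)) P'' (tf (step ps ps) a eps) [Y]"
        by (rule wk_cong) (auto simp: trr_def tf_trr)
      then show ?thesis using P P' Y q1 q2 by (simp add: exc_def wk_snoc tf_def)
    qed
  qed
qed

lemma bdelta_exc:
  assumes gd: "good ps ps" and ne: "P \<noteq> []"
  shows "bdelta Y ps P = (if last P = Y then exc (step ps ps) P else 0)"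
  using lc_good[OF gd ne] exc_vanish[OF ne, of ps ps] by (auto simp: bdelta_lc ne)

lemma Bp_bb:
  assumes gd: "good ps ps" and ps0: "ps [] = 1"
  shows "Bp ps w = bb_let Y ps w"
proof (induction "length w" arbitrary: w rule: less_induct)
  case less
  show ?case
  proof (cases "w = []")
    case True then show ?thesis by (simp add: bb_let_def)
  next
    case False
    have "Bp ps w = amp (trr ps) w" by (simp add: Bp_def amp_def)
    also have "\<dots> = (\<Sum>j\<in>{1..length w}. exc (trr ps) (take j w) * amp (trr ps) (drop j w))"
      by (rule bool_dec[OF False])
    also have "\<dots> = (\<Sum>j\<in>{1..length w}. bdelta Y ps (take j w) * bb_let Y ps (drop j w))"
    proof (rule sum.cong[OF refl])
      fix j assume j: "j \<in> {1..length w}"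
      then have tne: "take j w \<noteq> []" using False by auto
      have "amp (trr ps) (drop j w) = Bp ps (drop j w)" by (simp add: Bp_def amp_def)
      also have "\<dots> = bb_let Y ps (drop j w)" using less.hyps[of "drop j w"] j False by simp
      finally show "exc (trr ps) (take j w) * amp (trr ps) (drop j w) = bdelta Y ps (take j w) * bb_let Y ps (drop j w)"
        using exc_trr[OF tne, of ps] bdelta_exc[OF gd tne] by simp
    qed
    also have "\<dots> = bb_let Y ps w" using A1[OF gd ps0, of Y w] False by (simp add: eps_def)
    finally show ?thesis .
  qed
qed

lemma tens_zero_head:
  "(\<And>r. r \<in> set L \<Longrightarrow> r \<noteq> []) \<Longrightarrow> tens ((\<lambda>w. 0) # fs) L = 0"
proof (induction L)
  case Nil then show ?case by simp
next
  case (Cons r L)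
  then obtain r0 rs where "r = r0 # rs" by (cases r) auto
  with Cons show ?case by (simp add: tens_def)
qed

lemma bdelta_formula:
  assumes gd: "good ph ps" and gd2: "good ps ps" and ps0: "ps [] = 1"
  shows "bdelta X ph W = eps W + (\<Sum>k\<le>length W. lc ph (replicate (Suc k) X) * tens (eps # replicate k (bb_let Y ps) @ [eps]) (partial X (Suc k) W))"
proof (cases W)
  case Nil then show ?thesis by (simp add: bdelta_def eps_def)
next
  case (Cons b P)
  have ne: "\<And>k r. r \<in> set (partial X (Suc k) P) \<Longrightarrow> r \<noteq> []" using partial_len by fastforce
  have eX: "(\<lambda>w. eps (c # w)) = (\<lambda>w. 0)" for c by (rule ext) (simp add: eps_def)
  have Bpe: "Bp ps = bb_let Y ps" by (rule ext) (rule Bp_bb[OF gd2 ps0])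
  show ?thesis
  proof (cases b)
    case Y
    have "tens (eps # replicate k (bb_let Y ps) @ [eps]) (partial X (Suc k) W) = 0" for k
      using Cons Y by (simp add: partial_Suc_Cons tens_Cons_ext[OF ne] eX tens_zero_head[OF ne])
    then show ?thesis using Cons Y by (simp add: bdelta_def eps_def)
  next
    case X
    have t: "tens (eps # replicate k (bb_let Y ps) @ [eps]) (partial X (Suc k) (X # P))
        = tens (replicate k (bb_let Y ps) @ [eps]) (partial X k P)" for k
      by (simp add: partial_Suc_Cons tens_append tens_Cons_nil tens_Cons_ext[OF ne] eX tens_zero_head[OF ne] eps_def)
    have lhs: "bdelta X ph W = lc ph (X # P)"
    proof (cases "last (X # P) = X")
      case True then show ?thesis using Cons X by (simp add: bdelta_lc)
    next
      case False
      then have "lc ph (X # P) = 0" using lc_van[OF gd, of "X # P"] by simp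
      then show ?thesis using Cons X False by (simp add: bdelta_lc)
    qed
    have "(\<Sum>k\<le>length W. lc ph (replicate (Suc k) X) * tens (eps # replicate k (bb_let Y ps) @ [eps]) (partial X (Suc k) W))
        = (\<Sum>k\<le>Suc (length P). lc ph (replicate (Suc k) X) * tens (replicate k (bb_let Y ps) @ [eps]) (partial X k P))"
      using Cons X by (simp add: t del: replicate_Suc)
    also have "\<dots> = lc ph [X] * tens [eps] (partial X 0 P)
        + (\<Sum>k\<le>length P. lc ph (replicate (Suc (Suc k)) X) * tens (replicate (Suc k) (bb_let Y ps) @ [eps]) (partial X (Suc k) P))"
      by (simp only: sum.atMost_Suc_shift) simp
    also have "\<dots> = ph [X] * eps P
        + (\<Sum>k\<le>length P. lc ph (replicate (Suc (Suc k)) X) * tens (Bp ps # replicate k (Bp ps) @ [eps]) (partial X (Suc k) P))"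
      by (simp add: lc_single tens_single Bpe del: replicate_Suc) (simp add: Bpe)
    also have "\<dots> = lc ph (X # P)" by (rule lc_X_formula[OF gd, symmetric])
    finally show ?thesis using lhs Cons X by (simp add: eps_def)
  qed
qed


lemma app_cong: "(\<And>w. w \<in> supp P \<Longrightarrow> f w = g w) \<Longrightarrow> app f P = app g P"
  by (simp add: app_def)

lemma app_sum: "app (\<lambda>w. \<Sum>k<N. c k * g k w) P = (\<Sum>k<N. c k * app (g k) P)"
proof -
  have "app (\<lambda>w. \<Sum>k<N. c k * g k w) P = (\<Sum>w\<in>supp P. \<Sum>k<N. P w * (c k * g k w))"
    unfolding app_def by (simp add: sum_distrib_left)
  also have "\<dots> = (\<Sum>k<N. \<Sum>w\<in>supp P. P w * (c k * g k w))" by (rule sum.swap)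
  also have "\<dots> = (\<Sum>k<N. c k * app (g k) P)"
    unfolding app_def by (rule sum.cong[OF refl]) (simp add: sum_distrib_left mult.left_commute)
  finally show ?thesis .
qed

theorem proposition4:
  fixes phi psi :: "word \<Rightarrow> complex" and P :: cpoly
  assumes "unital phi" and "unital psi" and "c_free phi psi" and "is_poly P"
  shows "(app (bb_let X phi) P = app eps P + app (\<lambda>W. tens2 (bdelta X phi) (bb_let X phi) (delta_left X W)) P
       \<and> app (bb_let X phi) P = app eps P + app (\<lambda>W. tens2 (bb_let X phi) (bdelta X phi) (delta_right X W)) P)
     \<and> app (bdelta X phi) P = app eps P +
       (\<Sum>k. bcum phi (replicate (Suc k) (mono [X])) *
          app (\<lambda>W. tens ([eps] @ replicate k (bb_let Y psi) @ [eps]) (partial X (Suc k) W)) P)"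
proof -
  have ph0: "phi [] = 1" and ps0: "psi [] = 1" using assms(1,2) by (simp_all add: unital_def)
  have gd: "good phi psi" by (rule good_cfree[OF assms(3,1,2)])
  have gd2: "good psi psi" using assms(3) assms(2) good_free by (simp add: c_free_def)
  have e1: "bb_let X phi = (\<lambda>W. eps W + tens2 (bdelta X phi) (bb_let X phi) (delta_left X W))"
    by (rule ext) (subst A1[OF gd ph0], simp only: tens2_left)
  have e2: "bb_let X phi = (\<lambda>W. eps W + tens2 (bb_let X phi) (bdelta X phi) (delta_right X W))"
    by (rule ext) (subst A2[OF gd ph0], simp only: tens2_right)
  have a1: "app (bb_let X phi) P = app eps P + app (\<lambda>W. tens2 (bdelta X phi) (bb_let X phi) (delta_left X W)) P"
    by (subst e1) (rule app_add_fun)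
  have a2: "app (bb_let X phi) P = app eps P + app (\<lambda>W. tens2 (bb_let X phi) (bdelta X phi) (delta_right X W)) P"
    by (subst e2) (rule app_add_fun)
  have fin: "finite (length ` supp P)" using assms(4) by (simp add: is_poly_def)
  then obtain N where N0: "\<forall>n\<in>length ` supp P. n < N"
    unfolding finite_nat_set_iff_bounded by (elim exE) (rule that)
  have N: "\<And>w. w \<in> supp P \<Longrightarrow> length w < N" using N0 by simp
  let ?c = "\<lambda>k. bcum phi (replicate (Suc k) (mono [X]))"
  let ?g = "\<lambda>k W. tens ([eps] @ replicate k (bb_let Y psi) @ [eps]) (partial X (Suc k) W)"
  have c: "?c k = lc phi (replicate (Suc k) X)" for k by (simp add: lc_def)
  have gz: "?g k w = 0" if "length w < Suc k" for k w using partial_big[OF that] by simp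
  have appz: "app (?g k) P = 0" if "N \<le> k" for k
    unfolding app_def
  proof (rule sum.neutral, rule ballI)
    fix w assume "w \<in> supp P"
    then have "length w < Suc k" using N that by (meson less_SucI order_less_le_trans)
    then show "P w * ?g k w = 0" using gz by simp
  qed
  have "(\<lambda>k. ?c k * app (?g k) P) sums (\<Sum>k\<in>{..<N}. ?c k * app (?g k) P)"
  proof (rule sums_finite)
    fix k assume "k \<notin> {..<N}"
    then have "N \<le> k" by simp
    show "?c k * app (?g k) P = 0" by (simp only: appz[OF \<open>N \<le> k\<close>] mult_zero_right)
  qed simp
  then have suminf: "(\<Sum>k. ?c k * app (?g k) P) = (\<Sum>k<N. ?c k * app (?g k) P)"
    by (rule sums_unique[symmetric])
  have pw: "bdelta X phi w = eps w + (\<Sum>k<N. ?c k * ?g k w)" if w: "w \<in> supp P" for w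
  proof -
    have "bdelta X phi w = eps w + (\<Sum>k\<le>length w. lc phi (replicate (Suc k) X) * ?g k w)"
      using bdelta_formula[OF gd gd2 ps0, of w] by simp
    also have "(\<Sum>k\<le>length w. lc phi (replicate (Suc k) X) * ?g k w) = (\<Sum>k<N. lc phi (replicate (Suc k) X) * ?g k w)"
      by (rule sum.mono_neutral_left) (use N[OF w] gz in auto)
    finally show ?thesis by (simp only: c)
  qed
  have "app (bdelta X phi) P = app (\<lambda>w. eps w + (\<Sum>k<N. ?c k * ?g k w)) P"
    by (rule app_cong) (rule pw)
  also have "\<dots> = app eps P + (\<Sum>k<N. ?c k * app (?g k) P)"
    by (simp add: app_add_fun app_sum)
  finally have b: "app (bdelta X phi) P = app eps P + (\<Sum>k. ?c k * app (?g k) P)"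
    unfolding suminf .
  show ?thesis using a1 a2 b by blast
qed

end
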